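(* Let $(X,\|\cdot\|_X)$ be a reflexive Banach space, let $G\subset\mathcal{B}(X)$ be a dislocation group on $X$ (so that $(X,G)$ is a dislocation space), and let $(u_n)_{n\in\mathbb{N}_0}$ be a bounded sequence in $X$. Then there exist $\Lambda\in\mathbb{N}\cup\{0,+\infty\}$, a subsequence $(u_{N(n)})_{n\in\mathbb{N}_0}$ (with $N:\mathbb{N}_0\to\mathbb{N}_0$ strictly increasing), elements $w^{(l)}\in X$ for $l\in\mathbb{N}_0^{<\Lambda+1}$, and operators $g^{(l)}_{N(n)}\in G$ for $l\in\mathbb{N}_0^{<\Lambda+1}$, $n\in\mathbb{Z}_{\ge l}$, such that: (i) $g^{(0)}_{N(n)}=\mathrm{Id}_X$ for all $n\ge 0$, and $w^{(l)}\neq 0$ for every $1\le l\in\mathbb{N}_0^{<\Lambda+1}$; (ii) $(g^{(l)}_{N(n)})^{-1}g^{(m)}_{N(n)}\rightharpoonup 0$ operator-weakly as $n\to\infty$ whenever $l\neq m\in\mathbb{N}_0^{<\Lambda+1}$; (iii) $(g^{(l)}_{N(n)})^{-1}u_{N(n)}\to w^{(l)}$ weakly in $X$ as $n\to\infty$, for every $l\in\mathbb{N}_0^{<\Lambda+1}$; (iv) defining, for $L\in\mathbb{N}_0^{<\Lambda+1}$ and $n\in\mathbb{Z}_{\ge L}$, the residual $r^L_{N(n)}:=u_{N(n)}-\sum_{l=0}^L g^{(l)}_{N(n)}w^{(l)}$, one has $(g^{(l)}_{N(n)})^{-1}r^L_{N(n)}\to 0$ weakly in $X$ as $n\to\infty$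 for every $0\le l\le L$. Furthermore, if either $\Lambda<\infty$, or $\Lambda=\infty$ and $\|w^{(l)}\|_X\to 0$ as $l\to\infty$, then $$\lim_{L\to\Lambda}\ \sup_{\phi\in B_{X^*}(1)}\ \limsup_{n\to\infty}\ \sup_{g\in G}\ |\langle\phi,g^{-1}r^L_{N(n)}\rangle|=0.$$
   Context: For a Banach space $X$, $\mathcal{B}(X)$ denotes the bounded linear operators on $X$, $X^*$ the dual, $\langle\cdot,\cdot\rangle$ the duality pairing, and $B_{X^*}(1)$ the closed unit ball of $X^*$. A sequence $(A_n)\subset\mathcal{B}(X)$ converges operator-strongly to $A$ if $A_nu\to Au$ in norm for every $u\in X$, and operator-weakly to $A$ (written $A_n\rightharpoonup A$) if $A_nu\to Au$ weakly in $X$ for every $u\in X$; $A_n\not\rightharpoonup 0$ means $(A_n)$ does not converge operator-weakly to $0$. Dislocation group: a group $G\subset\mathcal{B}(X)$ (under composition) of bijective linear isometries of $X$ such that (1) every sequence $(g_n)\subset G$ with $g_n\not\rightharpoonup 0$ has a subsequence converging operator-strongly (to some element of $\mathcal{B}(X)$), and (2) for every sequence $(g_n)\subset G$ with $g_n\not\rightharpoonup 0$ and every sequence $(u_n)\subset X$ with $u_n\to 0$ weakly, there is a subsequence $(n_j)$ with $g_{n_j}u_{n_j}\to 0$ weakly in $X$. The pair $(X,G)$ is then called a dislocation space. Notation: $\mathbb{N}_0=\{0,1,2,\dots\}$; $\mathbb{Z}_{\ge l}=\{n\in\mathbb{Z}:n\ge l\}$; for $\Lambda\in\mathbb{N}\cup\{0,+\infty\}$,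 $\mathbb{N}_0^{<\Lambda+1}=\{0,\dots,\Lambda\}$ if $\Lambda<\infty$ and $=\mathbb{N}_0$ if $\Lambda=\infty$; when $\Lambda<\infty$, "$\lim_{L\to\Lambda}a_L$" means $a_\Lambda$. *)

theory Defs
  imports "HOL-Analysis.Analysis" "HOL-Library.Extended_Nat" "HOL-Library.Extended_Real"
begin

definition weakly_conv :: "(nat \<Rightarrow> 'a::real_normed_vector) \<Rightarrow> 'a \<Rightarrow> bool" where
  "weakly_conv u w \<longleftrightarrow>
     (\<forall>f :: 'a \<Rightarrow>\<^sub>L real. (\<lambda>n. blinfun_apply f (u n)) \<longlonglongrightarrow> blinfun_apply f w)"

definition reflexive_space :: "'a::real_normed_vector itself \<Rightarrow> bool" where
  "reflexive_space _ \<longleftrightarrow>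
     (\<forall>\<Phi> :: ('a \<Rightarrow>\<^sub>L real) \<Rightarrow>\<^sub>L real. \<exists>x::'a. \<forall>f. blinfun_apply \<Phi> f = blinfun_apply f x)"

definition op_strong_conv :: "(nat \<Rightarrow> 'a \<Rightarrow>\<^sub>L 'a) \<Rightarrow> ('a::real_normed_vector \<Rightarrow>\<^sub>L 'a) \<Rightarrow> bool" where
  "op_strong_conv A B \<longleftrightarrow> (\<forall>x. (\<lambda>n. blinfun_apply (A n) x) \<longlonglongrightarrow> blinfun_apply B x)"

definition op_weak_conv :: "(nat \<Rightarrow> 'a \<Rightarrow>\<^sub>L 'a) \<Rightarrow> ('a::real_normed_vector \<Rightarrow>\<^sub>L 'a) \<Rightarrow> bool" where
  "op_weak_conv A B \<longleftrightarrow> (\<forall>x. weakly_conv (\<lambda>n. blinfun_apply (A n) x) (blinfun_apply B x))"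

definition dislocation_group :: "('a::real_normed_vector \<Rightarrow>\<^sub>L 'a) set \<Rightarrow> bool" where
  "dislocation_group G \<longleftrightarrow>
     (\<forall>g\<in>G. bij (blinfun_apply g) \<and> (\<forall>x. norm (blinfun_apply g x) = norm x)) \<and>
     id_blinfun \<in> G \<and>
     (\<forall>g\<in>G. \<forall>h\<in>G. g o\<^sub>L h \<in> G) \<and>
     (\<forall>g\<in>G. \<exists>h\<in>G. g o\<^sub>L h = id_blinfun \<and> h o\<^sub>L g = id_blinfun) \<and>
     (\<forall>gs. range gs \<subseteq> G \<and> \<not> op_weak_conv gs 0 \<longrightarrow>
        (\<exists>r A. strict_mono r \<and> op_strong_conv (gs \<circ> r) A)) \<and>
     (\<forall>gs us. range gs \<subseteq> G \<and> \<not> op_weak_conv gs 0 \<and> weakly_conv us 0 \<longrightarrow>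
        (\<exists>r. strict_mono r \<and> weakly_conv (\<lambda>j. blinfun_apply (gs (r j)) (us (r j))) 0))"

end

theory Submission
  imports Defs "HOL-Library.Diagonal_Subsequence"
begin


definition sublin :: "('a::real_vector \<Rightarrow> real) \<Rightarrow> bool" where
  "sublin p \<longleftrightarrow> (\<forall>x y. p (x + y) \<le> p x + p y) \<and> (\<forall>c x. 0 \<le> c \<longrightarrow> p (c *\<^sub>R x) = c * p x)"

definition graph_ok :: "('a::real_vector \<Rightarrow> real) \<Rightarrow> ('a \<times> real) set \<Rightarrow> bool" where
  "graph_ok p Gr \<longleftrightarrow> (\<forall>x a b. (x,a)\<in>Gr \<longrightarrow> (x,b)\<in>Gr \<longrightarrow> a = b) \<and> (0,0) \<in> Gr \<and>
     (\<forall>x a y b. (x,a)\<in>Gr \<longrightarrow> (y,b)\<in>Gr \<longrightarrow> (x+y,a+b)\<in>Gr) \<and>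
     (\<forall>x a c. (x,a)\<in>Gr \<longrightarrow> (c *\<^sub>R x, c*a)\<in>Gr) \<and> (\<forall>x a. (x,a)\<in>Gr \<longrightarrow> a \<le> p x)"

lemma graph_ext:
  assumes p: "sublin p" and M: "graph_ok p M" and x0: "\<forall>a. (x0,a) \<notin> M"
  shows "\<exists>M'. graph_ok p M' \<and> M \<subseteq> M' \<and> M' \<noteq> M"
proof -
  have padd: "\<And>x y. p (x + y) \<le> p x + p y" and phom: "\<And>c x. 0 \<le> c \<Longrightarrow> p (c *\<^sub>R x) = c * p x"
    using p unfolding sublin_def by auto
  have Mfun: "\<And>x a b. (x,a)\<in>M \<Longrightarrow> (x,b)\<in>M \<Longrightarrow> a = b" and M0: "(0,0)\<in>M"
    and Madd: "\<And>x a y b. (x,a)\<in>M \<Longrightarrow> (y,b)\<in>M \<Longrightarrow> (x+y,a+b)\<in>M"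
    and Msc: "\<And>x a c. (x,a)\<in>M \<Longrightarrow> (c *\<^sub>R x, c*a)\<in>M"
    and Mp: "\<And>x a. (x,a)\<in>M \<Longrightarrow> a \<le> p x"
    using M unfolding graph_ok_def by blast+
  define S1 where "S1 = {b - p (y - x0) | y b. (y,b)\<in>M}"
  have key: "b - p (y - x0) \<le> p (z + x0) - d" if "(y,b)\<in>M" "(z,d)\<in>M" for y b z d
  proof -
    have "b + d \<le> p (y + z)" using Mp[OF Madd[OF that]] .
    also have "\<dots> = p ((y - x0) + (z + x0))" by (simp add: algebra_simps)
    also have "\<dots> \<le> p (y - x0) + p (z + x0)" by (rule padd)
    finally show ?thesis by simp
  qed
  define c where "c = Sup S1"
  have S1ne: "S1 \<noteq> {}" using M0 unfolding S1_def by blast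
  have c1: "b - p (y - x0) \<le> c" if "(y,b)\<in>M" for y b
    unfolding c_def
  proof (rule cSup_upper)
    show "b - p (y - x0) \<in> S1" using that unfolding S1_def by blast
    show "bdd_above S1" unfolding bdd_above_def S1_def using key[OF _ M0] by blast
  qed
  have c2: "c \<le> p (z + x0) - d" if "(z,d)\<in>M" for z d
    unfolding c_def using S1ne by (rule cSup_least) (use key[OF _ that] S1_def in blast)
  define M' where "M' = {(x + t *\<^sub>R x0, a + t * c) | x a t. (x,a)\<in>M}"
  have sub: "M \<subseteq> M'" unfolding M'_def by force
  have "(0 + 1 *\<^sub>R x0, 0 + 1 * c) \<in> M'" unfolding M'_def using M0 by blast
  hence new: "(x0, c) \<in> M'" by simp
  have dom: "(y - x) /\<^sub>R (t - t') \<in> fst ` M" if "(x,a)\<in>M" "(y,b)\<in>M" for x a y b t t'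
  proof -
    have "(y + (-1) *\<^sub>R x, b + (-1) * a) \<in> M" using Madd[OF that(2) Msc[OF that(1)]] .
    from Msc[OF this, of "inverse (t - t')"] have "(inverse (t - t') *\<^sub>R (y + (-1) *\<^sub>R x), inverse (t - t') * (b + (-1) * a)) \<in> M" .
    moreover have "inverse (t - t') *\<^sub>R (y + (-1) *\<^sub>R x) = (y - x) /\<^sub>R (t - t')" by simp
    ultimately show ?thesis by (metis fst_conv rev_image_eqI)
  qed
  have ok: "graph_ok p M'"
    unfolding graph_ok_def
  proof (intro conjI allI impI)
    fix z a1 a2 assume "(z,a1)\<in>M'" "(z,a2)\<in>M'"
    then obtain x a t y b t' where xa: "(x,a)\<in>M" and yb: "(y,b)\<in>M" and
      e: "z = x + t *\<^sub>R x0" "a1 = a + t * c" "z = y + t' *\<^sub>R x0" "a2 = b + t' * c"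
      unfolding M'_def by blast
    have tt: "t = t'"
    proof (rule ccontr)
      assume ne: "t \<noteq> t'"
      have "x + t *\<^sub>R x0 = y + t' *\<^sub>R x0" using e by simp
      hence "(t - t') *\<^sub>R x0 = y - x" by (simp add: algebra_simps)
      hence "inverse (t - t') *\<^sub>R ((t - t') *\<^sub>R x0) = (y - x) /\<^sub>R (t - t')" by simp
      hence "x0 = (y - x) /\<^sub>R (t - t')" using ne by simp
      with dom[OF xa yb, of t t'] x0 show False by force
    qed
    with e have "x = y" by simp
    with Mfun xa yb tt e show "a1 = a2" by blast
  next
    show "(0,0)\<in>M'" using sub M0 by blast
  next
    fix z1 a1 z2 a2 assume "(z1,a1)\<in>M'" "(z2,a2)\<in>M'"
    then obtain x a t y b t' where xa: "(x,a)\<in>M" and yb: "(y,b)\<in>M" and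
      e: "z1 = x + t *\<^sub>R x0" "a1 = a + t * c" "z2 = y + t' *\<^sub>R x0" "a2 = b + t' * c"
      unfolding M'_def by blast
    have "(z1+z2, a1+a2) = ((x+y) + (t+t') *\<^sub>R x0, (a+b) + (t+t')*c)" using e by (simp add: algebra_simps)
    then show "(z1+z2, a1+a2)\<in>M'" unfolding M'_def using Madd[OF xa yb] by blast
  next
    fix z1 a1 s assume "(z1,a1)\<in>M'"
    then obtain x a t where xa: "(x,a)\<in>M" and
      e: "z1 = x + t *\<^sub>R x0" "a1 = a + t * c"
      unfolding M'_def by blast
    have "(s *\<^sub>R z1, s*a1) = (s *\<^sub>R x + (s*t) *\<^sub>R x0, s*a + (s*t)*c)" using e by (simp add: algebra_simps)
    then show "(s *\<^sub>R z1, s*a1)\<in>M'" unfolding M'_def using Msc[OF xa] by blast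
  next
    fix z a1 assume "(z,a1)\<in>M'"
    then obtain x a t where xa: "(x,a)\<in>M" and
      e: "z = x + t *\<^sub>R x0" "a1 = a + t * c"
      unfolding M'_def by blast
    consider "t = 0" | "t > 0" | "t < 0" by linarith
    then show "a1 \<le> p z"
    proof cases
      case 1 then show ?thesis using e Mp[OF xa] by simp
    next
      case 2
      have "c \<le> p ((1/t) *\<^sub>R x + x0) - (1/t) * a" using c2[OF Msc[OF xa, of "1/t"]] .
      hence "t * c \<le> t * (p ((1/t) *\<^sub>R x + x0) - (1/t) * a)" using 2 by (simp add: mult_left_mono)
      also have "\<dots> = t * p ((1/t) *\<^sub>R x + x0) - a" using 2 by (simp add: algebra_simps)
      also have "t * p ((1/t) *\<^sub>R x + x0) = p (t *\<^sub>R ((1/t) *\<^sub>R x + x0))" using 2 by (simp add: phom)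
      also have "t *\<^sub>R ((1/t) *\<^sub>R x + x0) = z" using 2 e by (simp add: algebra_simps)
      finally show ?thesis using e by simp
    next
      case 3
      define s where "s = - t"
      have s: "s > 0" using 3 s_def by simp
      have "(1/s) * a - p ((1/s) *\<^sub>R x - x0) \<le> c" using c1[OF Msc[OF xa, of "1/s"]] .
      hence "s * ((1/s) * a - p ((1/s) *\<^sub>R x - x0)) \<le> s * c" using s by (simp add: mult_left_mono)
      moreover have "s * ((1/s) * a - p ((1/s) *\<^sub>R x - x0)) = a - s * p ((1/s) *\<^sub>R x - x0)" using s by (simp add: algebra_simps)
      moreover have "s * p ((1/s) *\<^sub>R x - x0) = p (s *\<^sub>R ((1/s) *\<^sub>R x - x0))" using s by (simp add: phom)
      moreover have "s *\<^sub>R ((1/s) *\<^sub>R x - x0) = z" using s e s_def by (simp add: algebra_simps)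
      ultimately show ?thesis using e s_def by simp
    qed
  qed
  have "M' \<noteq> M" using new x0 by blast
  with ok sub show ?thesis by blast
qed

theorem hahn_banach:
  assumes p: "sublin p" and G0: "graph_ok p G0"
  shows "\<exists>F. linear F \<and> (\<forall>x a. (x,a)\<in>G0 \<longrightarrow> F x = a) \<and> (\<forall>x. F x \<le> p x)"
proof -
  define A where "A = {Gr. graph_ok p Gr \<and> G0 \<subseteq> Gr}"
  have "\<forall>C\<in>chains A. \<exists>U\<in>A. \<forall>X\<in>C. X \<subseteq> U"
  proof
    fix C assume C: "C \<in> chains A"
    show "\<exists>U\<in>A. \<forall>X\<in>C. X \<subseteq> U"
    proof (cases "C = {}")
      case True then show ?thesis using G0 unfolding A_def by auto
    next
      case False
      have CA: "C \<subseteq> A" and ch: "\<And>X Y. X\<in>C \<Longrightarrow> Y\<in>C \<Longrightarrow> X \<subseteq> Y \<or> Y \<subseteq> X"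
        using C unfolding chains_def chain_subset_def by auto
      have two: "\<exists>Z\<in>C. (x,a)\<in>Z \<and> (y,b)\<in>Z" if "(x,a)\<in>\<Union>C" "(y,b)\<in>\<Union>C" for x a y b
        using that ch by blast
      have okC: "\<And>X. X\<in>C \<Longrightarrow> graph_ok p X" using CA unfolding A_def by auto
      have "graph_ok p (\<Union>C)"
        unfolding graph_ok_def
      proof (intro conjI allI impI)
        fix x a b assume "(x,a)\<in>\<Union>C" "(x,b)\<in>\<Union>C"
        then obtain Z where "Z\<in>C" "(x,a)\<in>Z" "(x,b)\<in>Z" using two by blast
        then show "a = b" using okC unfolding graph_ok_def by blast
      next
        obtain Z where "Z \<in> C" using False by blast
        then show "(0,0)\<in>\<Union>C" using okC unfolding graph_ok_def by blast
      next
        fix x a y b assume "(x,a)\<in>\<Union>C" "(y,b)\<in>\<Union>C"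
        then obtain Z where "Z\<in>C" "(x,a)\<in>Z" "(y,b)\<in>Z" using two by blast
        then show "(x+y,a+b)\<in>\<Union>C" using okC unfolding graph_ok_def by blast
      next
        fix x a c assume "(x,a)\<in>\<Union>C"
        then obtain Z where "Z\<in>C" "(x,a)\<in>Z" by blast
        then show "(c *\<^sub>R x, c*a)\<in>\<Union>C" using okC unfolding graph_ok_def by blast
      next
        fix x a assume "(x,a)\<in>\<Union>C"
        then obtain Z where "Z\<in>C" "(x,a)\<in>Z" by blast
        then show "a \<le> p x" using okC unfolding graph_ok_def by blast
      qed
      moreover have "G0 \<subseteq> \<Union>C" using False CA unfolding A_def by blast
      ultimately show ?thesis unfolding A_def by blast
    qed
  qed
  from Zorn_Lemma2[OF this] obtain M where MA: "M \<in> A" and max: "\<forall>X\<in>A. M \<subseteq> X \<longrightarrow> X = M" by blast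
  have Mok: "graph_ok p M" and G0M: "G0 \<subseteq> M" using MA unfolding A_def by auto
  have total: "\<exists>a. (x,a)\<in>M" for x
  proof (rule ccontr)
    assume "\<not> ?thesis"
    then obtain M' where "graph_ok p M'" "M \<subseteq> M'" "M' \<noteq> M" using graph_ext[OF p Mok] by blast
    with max G0M show False unfolding A_def by blast
  qed
  have Mfun: "\<And>x a b. (x,a)\<in>M \<Longrightarrow> (x,b)\<in>M \<Longrightarrow> a = b"
    and Madd: "\<And>x a y b. (x,a)\<in>M \<Longrightarrow> (y,b)\<in>M \<Longrightarrow> (x+y,a+b)\<in>M"
    and Msc: "\<And>x a c. (x,a)\<in>M \<Longrightarrow> (c *\<^sub>R x, c*a)\<in>M"
    and Mp: "\<And>x a. (x,a)\<in>M \<Longrightarrow> a \<le> p x"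
    using Mok unfolding graph_ok_def by blast+
  define F where "F x = (THE a. (x,a)\<in>M)" for x
  have FM: "(x, F x)\<in>M" for x
    unfolding F_def using total[of x] Mfun by (metis theI)
  have Fv: "(x,a)\<in>M \<Longrightarrow> F x = a" for x a using FM Mfun by blast
  have "linear F"
    by (rule linearI) (auto intro!: Fv Madd Msc FM)
  moreover have "\<forall>x a. (x,a)\<in>G0 \<longrightarrow> F x = a" using Fv G0M by blast
  moreover have "\<forall>x. F x \<le> p x" using Mp FM by blast
  ultimately show ?thesis by blast
qed




lemma sublin_zero: "sublin p \<Longrightarrow> p 0 = 0"
  unfolding sublin_def by (metis mult_zero_left order_refl scaleR_zero_left)

lemma sublin_norm: "0 \<le> c \<Longrightarrow> sublin (\<lambda>x. c * norm x)"
  unfolding sublin_def by (auto simp: norm_triangle_ineq mult_left_mono distrib_left[symmetric])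

lemma HB_sub:
  fixes p :: "'a::real_vector \<Rightarrow> real"
  assumes p: "sublin p" and pnn: "\<And>z. 0 \<le> p z" and S: "subspace S"
    and dist: "\<And>h. h\<in>S \<Longrightarrow> \<delta> \<le> p (g - h)" and dpos: "0 < \<delta>"
  shows "\<exists>F. linear F \<and> (\<forall>h\<in>S. F h = 0) \<and> F g = \<delta> \<and> (\<forall>z. F z \<le> p z)"
proof -
  have phom: "\<And>c x. 0 \<le> c \<Longrightarrow> p (c *\<^sub>R x) = c * p x" using p unfolding sublin_def by auto
  define G0 where "G0 = {(h + t *\<^sub>R g, t * \<delta>) | h t. h \<in> S}"
  have gS: "g \<notin> S" using dist[of g] dpos sublin_zero[OF p] by auto
  have "graph_ok p G0"
    unfolding graph_ok_def
  proof (intro conjI allI impI)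
    fix z a b assume "(z,a)\<in>G0" "(z,b)\<in>G0"
    then obtain h t h' t' where h: "h\<in>S" "h'\<in>S" and e: "z = h + t *\<^sub>R g" "a = t*\<delta>" "z = h' + t' *\<^sub>R g" "b = t'*\<delta>"
      unfolding G0_def by blast
    have "t = t'"
    proof (rule ccontr)
      assume ne: "t \<noteq> t'"
      have "(t - t') *\<^sub>R g = h' - h" using e by (simp add: algebra_simps)
      hence "inverse (t - t') *\<^sub>R ((t - t') *\<^sub>R g) = inverse (t - t') *\<^sub>R (h' - h)" by simp
      hence "g = inverse (t - t') *\<^sub>R (h' - h)" using ne by simp
      moreover have "inverse (t - t') *\<^sub>R (h' - h) \<in> S" using h S by (simp add: subspace_scale subspace_diff)
      ultimately show False using gS by simp
    qed
    then show "a = b" using e by simp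
  next
    show "(0,0)\<in>G0" unfolding G0_def using S subspace_0 by force
  next
    fix x a y b assume "(x,a)\<in>G0" "(y,b)\<in>G0"
    then obtain h t h' t' where h: "h\<in>S" "h'\<in>S" and e: "x = h + t *\<^sub>R g" "a = t*\<delta>" "y = h' + t' *\<^sub>R g" "b = t'*\<delta>"
      unfolding G0_def by blast
    have "(x+y, a+b) = ((h+h') + (t+t') *\<^sub>R g, (t+t')*\<delta>)" using e by (simp add: algebra_simps)
    moreover have "h + h' \<in> S" using h S by (simp add: subspace_add)
    ultimately show "(x+y,a+b)\<in>G0" unfolding G0_def by blast
  next
    fix x a c assume "(x,a)\<in>G0"
    then obtain h t where h: "h\<in>S" and e: "x = h + t *\<^sub>R g" "a = t*\<delta>"
      unfolding G0_def by blast
    have "(c *\<^sub>R x, c*a) = (c *\<^sub>R h + (c*t) *\<^sub>R g, (c*t)*\<delta>)" using e by (simp add: algebra_simps)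
    moreover have "c *\<^sub>R h \<in> S" using h S by (simp add: subspace_scale)
    ultimately show "(c *\<^sub>R x, c*a)\<in>G0" unfolding G0_def by blast
  next
    fix x a assume "(x,a)\<in>G0"
    then obtain h t where h: "h\<in>S" and e: "x = h + t *\<^sub>R g" "a = t*\<delta>"
      unfolding G0_def by blast
    show "a \<le> p x"
    proof (cases "t > 0")
      case True
      have "- ((1/t) *\<^sub>R h) \<in> S" using h S by (simp add: subspace_scale subspace_neg)
      hence "\<delta> \<le> p (g - - ((1/t) *\<^sub>R h))" by (rule dist)
      hence "t * \<delta> \<le> t * p (g - - ((1/t) *\<^sub>R h))" using True by (simp add: mult_left_mono)
      also have "\<dots> = p (t *\<^sub>R (g - - ((1/t) *\<^sub>R h)))" using True by (simp add: phom)
      also have "t *\<^sub>R (g - - ((1/t) *\<^sub>R h)) = x" using True e by (simp add: algebra_simps)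
      finally show ?thesis using e by simp
    next
      case False
      then have "t * \<delta> \<le> 0" using dpos by (simp add: mult_nonpos_nonneg)
      then show ?thesis using e pnn[of x] by simp
    qed
  qed
  from hahn_banach[OF p this] obtain F where F: "linear F" "\<forall>x a. (x,a)\<in>G0 \<longrightarrow> F x = a" "\<forall>x. F x \<le> p x"
    by blast
  have "\<forall>h\<in>S. F h = 0"
  proof
    fix h assume "h\<in>S"
    hence "(h + 0 *\<^sub>R g, 0 * \<delta>) \<in> G0" unfolding G0_def by blast
    then show "F h = 0" using F by simp
  qed
  moreover have "(0 + 1 *\<^sub>R g, 1 * \<delta>) \<in> G0" unfolding G0_def using S subspace_0 by blast
  hence "F g = \<delta>" using F by simp
  ultimately show ?thesis using F by blast
qed

lemma linear_le_norm_blinfun: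
  fixes F :: "'a::real_normed_vector \<Rightarrow> real"
  assumes "linear F" "\<And>z. F z \<le> c * norm z"
  shows "bounded_linear F" "\<And>z. \<bar>F z\<bar> \<le> c * norm z"
proof -
  show b: "\<bar>F z\<bar> \<le> c * norm z" for z
  proof -
    have "F (- z) = - F z" using assms(1) linear_neg by blast
    moreover have "F (-z) \<le> c * norm z" using assms(2)[of "-z"] by simp
    ultimately show ?thesis using assms(2)[of z] by linarith
  qed
  show "bounded_linear F"
  proof (rule bounded_linear_intro[where K = c])
    show "F (x + y) = F x + F y" for x y using assms(1) linear_add by blast
    show "F (r *\<^sub>R x) = r *\<^sub>R F x" for r x using assms(1) linear_scale by blast
    show "norm (F x) \<le> norm x * c" for x using b[of x] by (simp add: mult.commute)
  qed
qed

lemma HB_norming: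
  fixes x :: "'a::real_normed_vector"
  shows "\<exists>f::'a \<Rightarrow>\<^sub>L real. norm f \<le> 1 \<and> blinfun_apply f x = norm x"
proof (cases "x = 0")
  case True then show ?thesis by (intro exI[of _ 0]) simp
next
  case False
  have "subspace {0::'a}" by (simp add: subspace_def)
  from HB_sub[OF sublin_norm[of 1] _ this, where g = x and \<delta> = "norm x"] False
  obtain F where F: "linear F" "F x = norm x" "\<forall>z. F z \<le> norm z" by auto
  have bl: "bounded_linear F" and ab: "\<And>z. \<bar>F z\<bar> \<le> 1 * norm z"
    using linear_le_norm_blinfun[OF F(1), of 1] F(3) by auto
  show ?thesis
    by (rule exI[of _ "Blinfun F"]) (use bl ab F(2) in \<open>auto simp: bounded_linear_Blinfun_apply intro!: norm_blinfun_bound\<close>)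
qed

lemma HB_separate:
  fixes x :: "'a::real_normed_vector"
  assumes S: "subspace S" "closed S" and x: "x \<notin> S"
  shows "\<exists>f::'a \<Rightarrow>\<^sub>L real. (\<forall>y\<in>S. blinfun_apply f y = 0) \<and> blinfun_apply f x \<noteq> 0"
proof -
  have Sne: "S \<noteq> {}" using S subspace_0 by blast
  define d where "d = infdist x S"
  have d: "d > 0" unfolding d_def using infdist_pos_not_in_closed[OF S(2) Sne x] .
  have "d \<le> 1 * norm (x - h)" if "h\<in>S" for h
    using infdist_le[OF that, of x] by (simp add: d_def dist_norm)
  from HB_sub[OF sublin_norm[of 1] _ S(1) this d]
  obtain F where F: "linear F" "\<forall>h\<in>S. F h = 0" "F x = d" "\<forall>z. F z \<le> norm z" by auto
  have bl: "bounded_linear F" using linear_le_norm_blinfun[OF F(1), of 1] F(4) by auto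
  show ?thesis
    by (rule exI[of _ "Blinfun F"]) (use bl F d in \<open>auto simp: bounded_linear_Blinfun_apply\<close>)
qed

lemma weak_zero:
  fixes x :: "'a::real_normed_vector"
  assumes "\<And>f::'a \<Rightarrow>\<^sub>L real. blinfun_apply f x = 0" shows "x = 0"
  using HB_norming[of x] assms by auto

primrec dsum :: "(nat \<Rightarrow> 'a::real_vector) \<Rightarrow> (rat \<times> nat) list \<Rightarrow> 'a" where
  "dsum u [] = 0"
| "dsum u (qi # l) = of_rat (fst qi) *\<^sub>R u (snd qi) + dsum u l"

lemma dsum_append: "dsum u (l1 @ l2) = dsum u l1 + dsum u l2"
  by (induct l1) (auto simp: algebra_simps)

lemma dsum_scale: "dsum u (map (\<lambda>(q,i). (r*q, i)) l) = of_rat r *\<^sub>R dsum u l"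
  by (induct l) (auto simp: algebra_simps of_rat_mult)

lemma dsum_single: "u i = dsum u [(1,i)]" by simp


lemma dsum_closure_subspace:
  fixes u :: "nat \<Rightarrow> 'a::real_normed_vector"
  shows "subspace (closure (range (dsum u)))"
  unfolding subspace_def
proof (intro conjI ballI allI)
  have "dsum u [] \<in> closure (range (dsum u))" by (rule closure_subset[THEN subsetD], rule rangeI)
  then show "0 \<in> closure (range (dsum u))" by simp
next
  fix x y assume x: "x \<in> closure (range (dsum u))" and y: "y \<in> closure (range (dsum u))"
  obtain a where a: "\<forall>n. a n \<in> (range (dsum u))" "a \<longlonglongrightarrow> x" using x[unfolded closure_sequential] by blast
  obtain b where b: "\<forall>n. b n \<in> (range (dsum u))" "b \<longlonglongrightarrow> y" using y[unfolded closure_sequential] by blast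
  have "\<forall>n. a n + b n \<in> (range (dsum u))"
  proof
    fix n
    obtain l1 where "a n = dsum u l1" using a(1) by blast
    moreover obtain l2 where "b n = dsum u l2" using b(1) by blast
    ultimately have "a n + b n = dsum u (l1 @ l2)" by (simp add: dsum_append)
    then show "a n + b n \<in> range (dsum u)" by blast
  qed
  moreover have "(\<lambda>n. a n + b n) \<longlonglongrightarrow> x + y" using a b by (intro tendsto_add)
  ultimately show "x + y \<in> closure (range (dsum u))" unfolding closure_sequential by (intro exI[of _ "\<lambda>n. a n + b n"]) simp
next
  fix c :: real and x assume x: "x \<in> closure (range (dsum u))"
  obtain a where a: "\<forall>n. a n \<in> (range (dsum u))" "a \<longlonglongrightarrow> x" using x[unfolded closure_sequential] by blast
  have "c \<in> closure \<rat>" using Rats_closure_real by simp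
  then obtain r where r: "\<forall>n. r n \<in> \<rat>" "r \<longlonglongrightarrow> c" unfolding closure_sequential by blast
  have "r n *\<^sub>R a n \<in> (range (dsum u))" for n
  proof -
    obtain q where q: "r n = of_rat q" using r(1) by (meson Rats_cases)
    obtain l where l: "a n = dsum u l" using a(1) by blast
    have "r n *\<^sub>R a n = dsum u (map (\<lambda>(qq,i). (q*qq, i)) l)" using dsum_scale[of u q l] q l by simp
    then show ?thesis by blast
  qed
  moreover have "(\<lambda>n. r n *\<^sub>R a n) \<longlonglongrightarrow> c *\<^sub>R x" using a r by (intro tendsto_scaleR)
  ultimately show "c *\<^sub>R x \<in> closure (range (dsum u))" unfolding closure_sequential by (intro exI[of _ "\<lambda>n. r n *\<^sub>R a n"]) simp
qed


lemma blinfun_ge_abs_le: "\<bar>blinfun_apply f x\<bar> \<le> norm f * norm x"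
  using norm_blinfun[of f x] by simp

lemma wsc:
  fixes u :: "nat \<Rightarrow> 'a::real_normed_vector"
  assumes refl: "reflexive_space TYPE('a)" and bnd: "bounded (range u)"
  shows "\<exists>s w. strict_mono s \<and> weakly_conv (\<lambda>n. u (s n)) w"
proof -
  obtain B where B: "\<And>n. norm (u n) \<le> B" using bnd unfolding bounded_iff by blast
  have B0: "0 \<le> B" using B[of 0] norm_ge_zero order_trans by blast
  define D where "D = range (dsum u)"
  define Y where "Y = closure D"
  have Ysub: "subspace Y" unfolding Y_def D_def by (rule dsum_closure_subspace)
  have Ycl: "closed Y" unfolding Y_def by simp
  have uD: "u n \<in> D" for n unfolding D_def using dsum_single[of u n] by (metis rangeI)
  have uY: "u n \<in> Y" for n using uD closure_subset unfolding Y_def by blast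
  have cD: "countable D" unfolding D_def by simp
  have "\<forall>d. \<exists>f::'a \<Rightarrow>\<^sub>L real. norm f \<le> 1 \<and> blinfun_apply f d = norm d" using HB_norming by blast
  then have "\<exists>fd::'a \<Rightarrow> 'a \<Rightarrow>\<^sub>L real. \<forall>d. norm (fd d) \<le> 1 \<and> blinfun_apply (fd d) d = norm d" by (rule choice)
  then obtain fd :: "'a \<Rightarrow> 'a \<Rightarrow>\<^sub>L real" where fd: "\<And>d. norm (fd d) \<le> 1" "\<And>d. blinfun_apply (fd d) d = norm d" by blast
  define Fs where "Fs = fd ` D"
  have cFs: "countable Fs" unfolding Fs_def using cD by simp
  have Fsne: "Fs \<noteq> {}" unfolding Fs_def using uD by blast
  define p where "p f = (SUP n. \<bar>blinfun_apply f (u n)\<bar>)" for f :: "'a \<Rightarrow>\<^sub>L real"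
  have bdd: "bdd_above (range (\<lambda>n. \<bar>blinfun_apply f (u n)\<bar>))" for f :: "'a \<Rightarrow>\<^sub>L real"
  proof -
    have "\<bar>blinfun_apply f (u n)\<bar> \<le> norm f * B" for n
      using blinfun_ge_abs_le[of f "u n"] B[of n] by (meson mult_left_mono norm_ge_zero order_trans)
    then show ?thesis by (intro bdd_aboveI) auto
  qed
  have p_ge: "\<bar>blinfun_apply f (u n)\<bar> \<le> p f" for f :: "'a \<Rightarrow>\<^sub>L real" and n
    unfolding p_def by (rule cSUP_upper[OF _ bdd]) simp
  have p_le: "p f \<le> c" if "\<And>n. \<bar>blinfun_apply f (u n)\<bar> \<le> c" for f :: "'a \<Rightarrow>\<^sub>L real" and c
    unfolding p_def by (rule cSUP_least) (use that in auto)
  have p_nn: "0 \<le> p f" for f :: "'a \<Rightarrow>\<^sub>L real" using p_ge[of f 0] by linarith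
  have p_norm: "p f \<le> B * norm f" for f :: "'a \<Rightarrow>\<^sub>L real"
    by (rule p_le) (metis B blinfun_ge_abs_le mult.commute mult_left_mono norm_ge_zero order_trans)
  have p_neg: "p (- f) = p f" for f :: "'a \<Rightarrow>\<^sub>L real" unfolding p_def by (simp add: blinfun.minus_left)
  have p_sub: "sublin p"
    unfolding sublin_def
  proof (intro conjI allI impI)
    fix f g :: "'a \<Rightarrow>\<^sub>L real"
    show "p (f + g) \<le> p f + p g"
    proof (rule p_le)
      fix n
      have "\<bar>blinfun_apply (f + g) (u n)\<bar> \<le> \<bar>blinfun_apply f (u n)\<bar> + \<bar>blinfun_apply g (u n)\<bar>"
        by (simp add: blinfun.add_left abs_triangle_ineq)
      then show "\<bar>blinfun_apply (f + g) (u n)\<bar> \<le> p f + p g" using p_ge[of f n] p_ge[of g n] by linarith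
    qed
  next
    fix c :: real and f :: "'a \<Rightarrow>\<^sub>L real" assume c: "0 \<le> c"
    show "p (c *\<^sub>R f) = c * p f"
    proof (cases "c = 0")
      case True
      have "p 0 = 0" by (rule antisym[OF p_le p_nn]) simp
      then show ?thesis using True by simp
    next
      case False
      hence c': "c > 0" using c by simp
      have "p (c *\<^sub>R f) \<le> c * p f"
        by (rule p_le) (use c p_ge in \<open>auto simp: blinfun.scaleR_left abs_mult intro: mult_left_mono\<close>)
      moreover have "p f \<le> p (c *\<^sub>R f) / c"
      proof (rule p_le)
        fix n
        have "\<bar>blinfun_apply (c *\<^sub>R f) (u n)\<bar> = c * \<bar>blinfun_apply f (u n)\<bar>" using c by (simp add: blinfun.scaleR_left abs_mult)
        then show "\<bar>blinfun_apply f (u n)\<bar> \<le> p (c *\<^sub>R f) / c" using p_ge[of "c *\<^sub>R f" n] c' by (simp add: field_simps)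
      qed
      hence "c * p f \<le> p (c *\<^sub>R f)" using c' by (simp add: field_simps)
      ultimately show ?thesis by simp
    qed
  qed
  have dense: "\<exists>h\<in>span Fs. p (g - h) < \<epsilon>" if eps: "\<epsilon> > 0" for g :: "'a \<Rightarrow>\<^sub>L real" and \<epsilon> :: real
  proof (rule ccontr)
    assume "\<not> ?thesis"
    hence far: "\<And>h. h \<in> span Fs \<Longrightarrow> \<epsilon> \<le> p (g - h)" by (simp add: not_less)
    from HB_sub[OF p_sub p_nn subspace_span far eps]
    obtain F where F: "linear F" "\<forall>h\<in>span Fs. F h = 0" "F g = \<epsilon>" "\<forall>z. F z \<le> p z" by blast
    have Fle: "F z \<le> B * norm z" for z using F(4) p_norm order_trans by blast
    have Fbl: "bounded_linear F" using linear_le_norm_blinfun(1)[OF F(1) Fle] .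
    have Fabs: "\<bar>F z\<bar> \<le> p z" for z
    proof -
      have "F (- z) = - F z" using F(1) linear_neg by blast
      then show ?thesis using F(4) p_neg[of z] by (metis abs_le_iff minus_le_iff)
    qed
    obtain x :: 'a where x: "\<And>f. blinfun_apply (Blinfun F) f = blinfun_apply f x"
      using refl unfolding reflexive_space_def by blast
    have Fx: "F f = blinfun_apply f x" for f using x[of f] Fbl by (simp add: bounded_linear_Blinfun_apply)
    have xY: "x \<in> Y"
    proof (rule ccontr)
      assume "x \<notin> Y"
      from HB_separate[OF Ysub Ycl this] obtain f :: "'a \<Rightarrow>\<^sub>L real" where f: "\<forall>y\<in>Y. blinfun_apply f y = 0" "blinfun_apply f x \<noteq> 0" by blast
      have "p f \<le> 0" by (rule p_le) (use f(1) uY in simp)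
      hence "\<bar>F f\<bar> \<le> 0" using Fabs[of f] by linarith
      then show False using f(2) Fx[of f] by simp
    qed
    have xne: "x \<noteq> 0" using F(3) Fx[of g] eps by auto
    hence nx: "norm x > 0" by simp
    then obtain d where dD: "d \<in> D" and dd: "dist d x < norm x / 3"
      using xY unfolding Y_def closure_approachable by (metis divide_pos_pos zero_less_numeral)
    have "fd d \<in> span Fs" unfolding Fs_def using dD by (simp add: span_base)
    hence "blinfun_apply (fd d) x = 0" using F(2) Fx by metis
    hence "norm d = blinfun_apply (fd d) (d - x)" using fd(2)[of d] by (simp add: blinfun.diff_right)
    also have "\<dots> \<le> norm (fd d) * norm (d - x)" using blinfun_ge_abs_le[of "fd d" "d - x"] by linarith
    also have "\<dots> \<le> norm (d - x)" using fd(1)[of d] by (simp add: mult_left_le_one_le)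
    finally have "norm d < norm x / 3" using dd by (simp add: dist_norm)
    moreover have "norm x \<le> norm d + norm (d - x)" by (metis add_diff_cancel_left' norm_diff_ineq norm_minus_commute diff_add_cancel norm_triangle_ineq2 le_diff_eq)
    ultimately show False using dd nx unfolding dist_norm by linarith
  qed
  define e where "e = from_nat_into Fs"
  have eFs: "range e = Fs" unfolding e_def using Fsne cFs by simp
  interpret S: subseqs "\<lambda>k s. convergent (\<lambda>n. blinfun_apply (e k) (u (s n)))"
  proof
    fix k and s :: "nat \<Rightarrow> nat" assume "strict_mono s"
    have "\<bar>blinfun_apply (e k) (u (s n))\<bar> \<le> norm (e k) * B" for n
      using blinfun_ge_abs_le[of "e k" "u (s n)"] B[of "s n"] by (meson mult_left_mono norm_ge_zero order_trans)
    hence "bounded (range (\<lambda>n. blinfun_apply (e k) (u (s n))))" unfolding bounded_iff by auto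
    from bounded_imp_convergent_subsequence[OF this] obtain l r where
      "strict_mono r" "((\<lambda>n. blinfun_apply (e k) (u (s n))) \<circ> r) \<longlonglongrightarrow> l" by blast
    then show "\<exists>r'. strict_mono r' \<and> convergent (\<lambda>n. blinfun_apply (e k) (u ((s \<circ> r') n)))"
      unfolding convergent_def by (auto simp: o_def)
  qed
  define s where "s = S.diagseq"
  have smono: "strict_mono s" unfolding s_def by (rule S.subseq_diagseq)
  have conv_e: "convergent (\<lambda>n. blinfun_apply (e k) (u (s n)))" for k
  proof -
    have "convergent (\<lambda>n. blinfun_apply (e k) (u ((S.diagseq \<circ> (+) (Suc k)) n)))"
    proof (rule S.diagseq_holds)
      fix r s' n assume r: "strict_mono (r::nat\<Rightarrow>nat)" and c: "convergent (\<lambda>m. blinfun_apply (e n) (u (s' m)))"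
      then show "convergent (\<lambda>m. blinfun_apply (e n) (u ((s' \<circ> r) m)))"
        unfolding convergent_def using LIMSEQ_subseq_LIMSEQ[OF _ r] by (fastforce simp: o_def)
    qed
    then obtain l where "(\<lambda>n. blinfun_apply (e k) (u (S.diagseq (n + Suc k)))) \<longlonglongrightarrow> l"
      unfolding convergent_def by (auto simp: o_def add.commute)
    then have "(\<lambda>n. blinfun_apply (e k) (u (S.diagseq n))) \<longlonglongrightarrow> l"
      by (rule LIMSEQ_offset)
    then show ?thesis unfolding s_def convergent_def by blast
  qed
  define C where "C = {h::'a \<Rightarrow>\<^sub>L real. convergent (\<lambda>n. blinfun_apply h (u (s n)))}"
  have conv_span: "span Fs \<subseteq> C"
  proof (rule span_minimal)
    show "Fs \<subseteq> C" using conv_e eFs unfolding C_def by auto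
    show "subspace C"
      unfolding subspace_def
    proof (intro conjI ballI allI)
      show "0 \<in> C" unfolding C_def by (simp add: convergent_const)
    next
      fix x y assume "x \<in> C" "y \<in> C"
      then show "x + y \<in> C" unfolding C_def
        by (simp add: blinfun.add_left convergent_add)
    next
      fix c :: real and x assume "x \<in> C"
      then obtain l where "(\<lambda>n. blinfun_apply x (u (s n))) \<longlonglongrightarrow> l" unfolding convergent_def C_def by blast
      then have "(\<lambda>n. c *\<^sub>R blinfun_apply x (u (s n))) \<longlonglongrightarrow> c *\<^sub>R l" by (intro tendsto_scaleR tendsto_const)
      then show "c *\<^sub>R x \<in> C"
        unfolding convergent_def C_def by (auto simp: blinfun.scaleR_left)
    qed
  qed
  have conv_all: "convergent (\<lambda>n. blinfun_apply g (u (s n)))" for g :: "'a \<Rightarrow>\<^sub>L real"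
  proof -
    have "Cauchy (\<lambda>n. blinfun_apply g (u (s n)))"
    proof (rule CauchyI)
      fix \<epsilon> :: real assume eps: "0 < \<epsilon>"
      obtain h where h: "h \<in> span Fs" "p (g - h) < \<epsilon>/3" using dense[of "\<epsilon>/3" g] eps by auto
      have "Cauchy (\<lambda>n. blinfun_apply h (u (s n)))" using conv_span h(1) Cauchy_convergent_iff unfolding C_def by blast
      then obtain M where M: "\<And>m n. m \<ge> M \<Longrightarrow> n \<ge> M \<Longrightarrow> norm (blinfun_apply h (u (s m)) - blinfun_apply h (u (s n))) < \<epsilon>/3"
        using eps unfolding Cauchy_iff by (meson divide_pos_pos zero_less_numeral)
      have gh: "\<bar>blinfun_apply g (u k) - blinfun_apply h (u k)\<bar> < \<epsilon>/3" for k
        using p_ge[of "g - h" k] h(2) by (simp add: blinfun.diff_left)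
      show "\<exists>M. \<forall>m\<ge>M. \<forall>n\<ge>M. norm (blinfun_apply g (u (s m)) - blinfun_apply g (u (s n))) < \<epsilon>"
      proof (intro exI allI impI)
        fix m n assume "M \<le> m" "M \<le> n"
        with M have "\<bar>blinfun_apply h (u (s m)) - blinfun_apply h (u (s n))\<bar> < \<epsilon>/3" by simp
        with gh[of "s m"] gh[of "s n"]
        show "norm (blinfun_apply g (u (s m)) - blinfun_apply g (u (s n))) < \<epsilon>"
          unfolding real_norm_def abs_less_iff by linarith
      qed
    qed
    then show ?thesis using Cauchy_convergent_iff by blast
  qed
  define \<Phi> where "\<Phi> g = lim (\<lambda>n. blinfun_apply g (u (s n)))" for g :: "'a \<Rightarrow>\<^sub>L real"
  have \<Phi>lim: "(\<lambda>n. blinfun_apply g (u (s n))) \<longlonglongrightarrow> \<Phi> g" for g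
    unfolding \<Phi>_def using conv_all convergent_LIMSEQ_iff by blast
  have \<Phi>bl: "bounded_linear \<Phi>"
  proof (rule bounded_linear_intro[where K = B])
    fix g1 g2 :: "'a \<Rightarrow>\<^sub>L real"
    have "(\<lambda>n. blinfun_apply (g1 + g2) (u (s n))) \<longlonglongrightarrow> \<Phi> g1 + \<Phi> g2"
      unfolding blinfun.add_left by (intro tendsto_add \<Phi>lim)
    then show "\<Phi> (g1 + g2) = \<Phi> g1 + \<Phi> g2" using \<Phi>lim LIMSEQ_unique by blast
  next
    fix r :: real and g :: "'a \<Rightarrow>\<^sub>L real"
    have "(\<lambda>n. blinfun_apply (r *\<^sub>R g) (u (s n))) \<longlonglongrightarrow> r *\<^sub>R \<Phi> g"
      unfolding blinfun.scaleR_left by (intro tendsto_scaleR tendsto_const \<Phi>lim)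
    then show "\<Phi> (r *\<^sub>R g) = r *\<^sub>R \<Phi> g" using \<Phi>lim LIMSEQ_unique by blast
  next
    fix g :: "'a \<Rightarrow>\<^sub>L real"
    have "(\<lambda>n. \<bar>blinfun_apply g (u (s n))\<bar>) \<longlonglongrightarrow> \<bar>\<Phi> g\<bar>" by (intro tendsto_rabs \<Phi>lim)
    moreover have "\<forall>n\<ge>0. \<bar>blinfun_apply g (u (s n))\<bar> \<le> norm g * B"
      using blinfun_ge_abs_le B by (meson mult_left_mono norm_ge_zero order_trans)
    ultimately have "\<bar>\<Phi> g\<bar> \<le> norm g * B" by (rule Lim_bounded)
    then show "norm (\<Phi> g) \<le> norm g * B" by simp
  qed
  obtain w :: 'a where w: "\<And>f. blinfun_apply (Blinfun \<Phi>) f = blinfun_apply f w"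
    using refl unfolding reflexive_space_def by blast
  have "weakly_conv (\<lambda>n. u (s n)) w"
    unfolding weakly_conv_def using \<Phi>lim w \<Phi>bl by (simp add: bounded_linear_Blinfun_apply)
  then show ?thesis using smono by blast
qed



lemma wc_subseq:
  assumes "weakly_conv v w" "strict_mono s" shows "weakly_conv (\<lambda>n. v (s n)) w"
  unfolding weakly_conv_def
proof
  fix f :: "'a \<Rightarrow>\<^sub>L real"
  have "(\<lambda>n. blinfun_apply f (v n)) \<longlonglongrightarrow> blinfun_apply f w" using assms(1) unfolding weakly_conv_def by blast
  from LIMSEQ_subseq_LIMSEQ[OF this assms(2)]
  show "(\<lambda>n. blinfun_apply f (v (s n))) \<longlonglongrightarrow> blinfun_apply f w" by (simp add: o_def)
qed

lemma wc_ev: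
  assumes "weakly_conv v w" "\<And>n. n \<ge> m \<Longrightarrow> v' n = v n" shows "weakly_conv v' w"
  unfolding weakly_conv_def
proof
  fix f :: "'a \<Rightarrow>\<^sub>L real"
  have a: "(\<lambda>n. blinfun_apply f (v n)) \<longlonglongrightarrow> blinfun_apply f w" using assms(1) unfolding weakly_conv_def by blast
  have "eventually (\<lambda>n. blinfun_apply f (v n) = blinfun_apply f (v' n)) sequentially"
  proof (rule eventually_sequentiallyI[of m])
    fix n assume "m \<le> n" then show "blinfun_apply f (v n) = blinfun_apply f (v' n)" using assms(2)[of n] by simp
  qed
  then show "(\<lambda>n. blinfun_apply f (v' n)) \<longlonglongrightarrow> blinfun_apply f w"
    by (rule Lim_transform_eventually[OF a])
qed

lemma wc_const: "weakly_conv (\<lambda>n. c) c"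
  unfolding weakly_conv_def by simp

lemma wc_add: "weakly_conv v w \<Longrightarrow> weakly_conv v' w' \<Longrightarrow> weakly_conv (\<lambda>n. v n + v' n) (w + w')"
  unfolding weakly_conv_def by (simp add: blinfun.add_right tendsto_add)

lemma wc_diff: "weakly_conv v w \<Longrightarrow> weakly_conv v' w' \<Longrightarrow> weakly_conv (\<lambda>n. v n - v' n) (w - w')"
  unfolding weakly_conv_def by (simp add: blinfun.diff_right tendsto_diff)

lemma wc_sum: "finite I \<Longrightarrow> (\<And>i. i \<in> I \<Longrightarrow> weakly_conv (v i) (w i)) \<Longrightarrow>
    weakly_conv (\<lambda>n. \<Sum>i\<in>I. v i n) (\<Sum>i\<in>I. w i)"
proof (induct I rule: finite_induct)
  case empty then show ?case by (simp add: wc_const)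
next
  case (insert x F)
  then show ?case by (simp add: wc_add)
qed

lemma wc_unique:
  fixes v :: "nat \<Rightarrow> 'a::real_normed_vector"
  assumes "weakly_conv v w" "weakly_conv v w'" shows "w = w'"
proof -
  have "blinfun_apply f (w - w') = 0" for f :: "'a \<Rightarrow>\<^sub>L real"
  proof -
    have "(\<lambda>n. blinfun_apply f (v n)) \<longlonglongrightarrow> blinfun_apply f w" "(\<lambda>n. blinfun_apply f (v n)) \<longlonglongrightarrow> blinfun_apply f w'"
      using assms unfolding weakly_conv_def by blast+
    then have "blinfun_apply f w = blinfun_apply f w'" by (rule LIMSEQ_unique)
    then show ?thesis by (simp add: blinfun.diff_right)
  qed
  then have "w - w' = 0" by (rule weak_zero)
  then show ?thesis by simp
qed

lemma wc_strong: "v \<longlonglongrightarrow> w \<Longrightarrow> weakly_conv v w"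
  unfolding weakly_conv_def by (auto intro: blinfun.tendsto tendsto_const)

lemma wc_blinfun:
  fixes T :: "'a::real_normed_vector \<Rightarrow>\<^sub>L 'b::real_normed_vector"
  assumes "weakly_conv v w" shows "weakly_conv (\<lambda>n. blinfun_apply T (v n)) (blinfun_apply T w)"
  unfolding weakly_conv_def
proof
  fix f :: "'b \<Rightarrow>\<^sub>L real"
  have "(\<lambda>n. blinfun_apply (f o\<^sub>L T) (v n)) \<longlonglongrightarrow> blinfun_apply (f o\<^sub>L T) w"
    using assms unfolding weakly_conv_def by blast
  then show "(\<lambda>n. blinfun_apply f (blinfun_apply T (v n))) \<longlonglongrightarrow> blinfun_apply f (blinfun_apply T w)" by simp
qed

lemma wc_norm_le:
  fixes v :: "nat \<Rightarrow> 'a::real_normed_vector"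
  assumes "weakly_conv v w" "\<And>n. norm (v n) \<le> c" shows "norm w \<le> c"
proof -
  obtain f :: "'a \<Rightarrow>\<^sub>L real" where f: "norm f \<le> 1" "blinfun_apply f w = norm w" using HB_norming by blast
  have lim: "(\<lambda>n. blinfun_apply f (v n)) \<longlonglongrightarrow> norm w" using assms(1) f(2) unfolding weakly_conv_def by metis
  have "blinfun_apply f (v n) \<le> c" for n
  proof -
    have "blinfun_apply f (v n) \<le> norm f * norm (v n)" using blinfun_ge_abs_le[of f "v n"] by linarith
    also have "\<dots> \<le> 1 * norm (v n)" using f(1) by (simp add: mult_left_le_one_le)
    finally show ?thesis using assms(2)[of n] by simp
  qed
  then show ?thesis using Lim_bounded[OF lim, of 0] by auto
qed

lemma freq_subseq:
  fixes P :: "nat \<Rightarrow> bool"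
  assumes "\<And>m. \<exists>n\<ge>m. P n"
  shows "\<exists>s::nat\<Rightarrow>nat. strict_mono s \<and> (\<forall>n. P (s n))"
proof -
  have "\<forall>m. \<exists>n\<ge>m. n \<in> {n. P n}" using assms by simp
  have inf: "infinite {n. P n}"
  proof
    assume "finite {n. P n}"
    then obtain m where m: "\<forall>n\<in>{n. P n}. n \<le> m" unfolding finite_nat_set_iff_bounded_le by blast
    obtain n where "n \<ge> Suc m" "P n" using assms by blast
    then show False using m by auto
  qed
  have "strict_mono (enumerate {n. P n}) \<and> (\<forall>n. P (enumerate {n. P n} n))"
    using strict_mono_enumerate[OF inf] enumerate_in_set[OF inf] by simp
  then show ?thesis by blast
qed

lemma diag_seq:
  fixes \<sigma> :: "nat \<Rightarrow> nat \<Rightarrow> nat"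
  assumes s0: "strict_mono (\<sigma> 0)" and st: "\<And>n. \<exists>t. strict_mono t \<and> \<sigma> (Suc n) = \<sigma> n \<circ> t"
  shows "strict_mono (\<lambda>n. \<sigma> n n)" "\<And>m. \<exists>\<tau>. strict_mono \<tau> \<and> (\<forall>n\<ge>m. \<sigma> n n = \<sigma> m (\<tau> n))"
proof -
  have "\<exists>t. \<forall>n. strict_mono (t n) \<and> \<sigma> (Suc n) = \<sigma> n \<circ> t n"
    using st by (intro choice allI) blast
  then obtain t where t: "\<And>n. strict_mono (t n)" "\<And>n. \<sigma> (Suc n) = \<sigma> n \<circ> t n"
    by blast
  define C where "C m = rec_nat id (\<lambda>k c. c \<circ> t (m + k))" for m
  have C0: "C m 0 = id" and CS: "C m (Suc k) = C m k \<circ> t (m + k)" for m k unfolding C_def by simp_all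
  have Cmono: "strict_mono (C m k)" for m k
    by (induct k) (simp_all add: C0 CS strict_mono_def t(1)[unfolded strict_mono_def])
  have Csig: "\<sigma> (m + k) = \<sigma> m \<circ> C m k" for m k
    by (induct k) (simp_all add: C0 CS t(2) o_assoc)
  have tau: "\<exists>\<tau>. strict_mono \<tau> \<and> (\<forall>n\<ge>m. \<sigma> n n = \<sigma> m (\<tau> n))" for m
  proof -
    define \<tau> where "\<tau> n = (if n < m then n else C m (n - m) n)" for n
    have "\<tau> n < \<tau> (Suc n)" for n
    proof (cases "Suc n < m")
      case True then show ?thesis unfolding \<tau>_def by simp
    next
      case False
      show ?thesis
      proof (cases "n < m")
        case True
        with False have "Suc n = m" by simp
        then show ?thesis unfolding \<tau>_def by (simp add: C0)
      next
        case nm: False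
        then have e: "Suc n - m = Suc (n - m)" by simp
        have "C m (n - m) n < C m (n - m) (Suc n)" using Cmono strict_monoD by blast
        also have "\<dots> \<le> C m (n - m) (t (m + (n - m)) (Suc n))"
          using Cmono[of m "n - m"] seq_suble[OF t(1)] strict_mono_less_eq by blast
        finally show ?thesis unfolding \<tau>_def using nm e by (simp add: CS)
      qed
    qed
    then have "strict_mono \<tau>" by (simp add: strict_mono_Suc_iff)
    moreover have "\<forall>n\<ge>m. \<sigma> n n = \<sigma> m (\<tau> n)"
    proof (intro allI impI)
      fix n assume "m \<le> n"
      then have "\<sigma> n = \<sigma> m \<circ> C m (n - m)" using Csig[of m "n - m"] by simp
      then show "\<sigma> n n = \<sigma> m (\<tau> n)" unfolding \<tau>_def using \<open>m \<le> n\<close> by simp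
    qed
    ultimately show ?thesis by blast
  qed
  then show "\<And>m. \<exists>\<tau>. strict_mono \<tau> \<and> (\<forall>n\<ge>m. \<sigma> n n = \<sigma> m (\<tau> n))" .
  obtain \<tau> where "strict_mono \<tau>" "\<forall>n\<ge>0. \<sigma> n n = \<sigma> 0 (\<tau> n)" using tau[of 0] by blast
  then show "strict_mono (\<lambda>n. \<sigma> n n)" using s0 by (simp add: strict_mono_def)
qed


definition owc :: "(nat \<Rightarrow> 'a::real_normed_vector \<Rightarrow>\<^sub>L 'a) \<Rightarrow> bool" where
  "owc h \<longleftrightarrow> op_weak_conv h 0"

lemma owc_iff: "owc h \<longleftrightarrow> (\<forall>x. weakly_conv (\<lambda>n. blinfun_apply (h n) x) 0)"
  unfolding owc_def op_weak_conv_def by simp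

lemma owc_subseq: "owc h \<Longrightarrow> strict_mono s \<Longrightarrow> owc (\<lambda>n. h (s n))"
  unfolding owc_iff using wc_subseq by blast

lemma owc_ev: "owc h \<Longrightarrow> (\<And>n. n \<ge> m \<Longrightarrow> h' n = h n) \<Longrightarrow> owc h'"
  unfolding owc_iff
proof
  fix x assume "\<forall>x. weakly_conv (\<lambda>n. blinfun_apply (h n) x) 0" "\<And>n. n \<ge> m \<Longrightarrow> h' n = h n"
  then show "weakly_conv (\<lambda>n. blinfun_apply (h' n) x) 0"
    using wc_ev[of "\<lambda>n. blinfun_apply (h n) x" 0 m "\<lambda>n. blinfun_apply (h' n) x"] by simp
qed

definition NW :: "(nat \<Rightarrow> 'a::real_normed_vector \<Rightarrow>\<^sub>L 'a) \<Rightarrow> bool" where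
  "NW h \<longleftrightarrow> (\<exists>x (f::'a \<Rightarrow>\<^sub>L real) \<epsilon>. \<epsilon> > 0 \<and> (\<forall>n. \<epsilon> \<le> \<bar>blinfun_apply f (blinfun_apply (h n) x)\<bar>))"

lemma NW_subseq: "NW h \<Longrightarrow> NW (\<lambda>n. h (s n))"
  unfolding NW_def by blast

lemma NW_not_owc: "NW h \<Longrightarrow> \<not> owc h"
proof
  assume "NW h" "owc h"
  then obtain x and f :: "'a \<Rightarrow>\<^sub>L real" and \<epsilon> where e: "\<epsilon> > 0" "\<And>n. \<epsilon> \<le> \<bar>blinfun_apply f (blinfun_apply (h n) x)\<bar>"
    unfolding NW_def by blast
  have "(\<lambda>n. blinfun_apply f (blinfun_apply (h n) x)) \<longlonglongrightarrow> 0"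
    using \<open>owc h\<close> unfolding owc_iff weakly_conv_def by (metis blinfun.zero_right)
  then obtain no where "\<forall>n\<ge>no. norm (blinfun_apply f (blinfun_apply (h n) x) - 0) < \<epsilon>"
    using e(1) unfolding LIMSEQ_iff by blast
  then have "\<bar>blinfun_apply f (blinfun_apply (h no) x)\<bar> < \<epsilon>" by simp
  then show False using e(2)[of no] by simp
qed

lemma not_owc_NW:
  assumes "\<not> owc h" shows "\<exists>s. strict_mono s \<and> NW (\<lambda>n. h (s n))"
proof -
  obtain x where "\<not> weakly_conv (\<lambda>n. blinfun_apply (h n) x) 0" using assms unfolding owc_iff by blast
  then obtain f :: "'a \<Rightarrow>\<^sub>L real" where f: "\<not> (\<lambda>n. blinfun_apply f (blinfun_apply (h n) x)) \<longlonglongrightarrow> 0"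
    unfolding weakly_conv_def by (metis blinfun.zero_right)
  then obtain r where r: "r > 0" "\<And>no. \<exists>n\<ge>no. \<not> norm (blinfun_apply f (blinfun_apply (h n) x) - 0) < r"
    unfolding LIMSEQ_iff by blast
  have "\<And>m. \<exists>n\<ge>m. r \<le> \<bar>blinfun_apply f (blinfun_apply (h n) x)\<bar>"
    using r(2) by (simp add: not_less)
  from freq_subseq[OF this] obtain s :: "nat \<Rightarrow> nat" where "strict_mono s" "\<forall>n. r \<le> \<bar>blinfun_apply f (blinfun_apply (h (s n)) x)\<bar>"
    by blast
  then show ?thesis unfolding NW_def using r(1) by blast
qed

locale prof =
  fixes G :: "('a::banach \<Rightarrow>\<^sub>L 'a) set" and u :: "nat \<Rightarrow> 'a"
  assumes refl: "reflexive_space TYPE('a)" and dg: "dislocation_group G" and bnd: "bounded (range u)"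
begin

lemma G_iso: "g \<in> G \<Longrightarrow> norm (blinfun_apply g x) = norm x"
  using dg unfolding dislocation_group_def by blast
lemma G_id: "id_blinfun \<in> G"
  using dg unfolding dislocation_group_def by blast
lemma G_comp: "g \<in> G \<Longrightarrow> h \<in> G \<Longrightarrow> g o\<^sub>L h \<in> G"
  using dg unfolding dislocation_group_def by blast
lemma G_inv: "g \<in> G \<Longrightarrow> \<exists>h\<in>G. g o\<^sub>L h = id_blinfun \<and> h o\<^sub>L g = id_blinfun"
  using dg unfolding dislocation_group_def by blast
lemma G_strong: "(\<And>n. gs n \<in> G) \<Longrightarrow> \<not> owc gs \<Longrightarrow> \<exists>r A. strict_mono r \<and> (\<forall>x. (\<lambda>n. blinfun_apply (gs (r n)) x) \<longlonglongrightarrow> blinfun_apply A x)"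
proof -
  assume a: "\<And>n. gs n \<in> G" "\<not> owc gs"
  have "range gs \<subseteq> G \<and> \<not> op_weak_conv gs 0" using a unfolding owc_def by blast
  then have "\<exists>r A. strict_mono r \<and> op_strong_conv (gs \<circ> r) A" using dg unfolding dislocation_group_def by blast
  then show ?thesis unfolding op_strong_conv_def by auto
qed
lemma G_weak: "(\<And>n. gs n \<in> G) \<Longrightarrow> \<not> owc gs \<Longrightarrow> weakly_conv us 0 \<Longrightarrow>
    \<exists>r. strict_mono r \<and> weakly_conv (\<lambda>j. blinfun_apply (gs (r j)) (us (r j))) 0"
proof -
  assume a: "\<And>n. gs n \<in> G" "\<not> owc gs" "weakly_conv us 0"
  have "range gs \<subseteq> G \<and> \<not> op_weak_conv gs 0 \<and> weakly_conv us 0" using a unfolding owc_def by blast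
  then show ?thesis using dg unfolding dislocation_group_def by blast
qed

definition gi :: "'a \<Rightarrow>\<^sub>L 'a \<Rightarrow> 'a \<Rightarrow>\<^sub>L 'a" where
  "gi g = (SOME h. h \<in> G \<and> g o\<^sub>L h = id_blinfun \<and> h o\<^sub>L g = id_blinfun)"

lemma gi_props: assumes "g \<in> G" shows "gi g \<in> G" "g o\<^sub>L gi g = id_blinfun" "gi g o\<^sub>L g = id_blinfun"
proof -
  have "\<exists>h. h \<in> G \<and> g o\<^sub>L h = id_blinfun \<and> h o\<^sub>L g = id_blinfun" using G_inv[OF assms] by blast
  then have "gi g \<in> G \<and> g o\<^sub>L gi g = id_blinfun \<and> gi g o\<^sub>L g = id_blinfun"
    unfolding gi_def by (rule someI_ex)
  then show "gi g \<in> G" "g o\<^sub>L gi g = id_blinfun" "gi g o\<^sub>L g = id_blinfun" by blast+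
qed

lemma gi_G: "g \<in> G \<Longrightarrow> gi g \<in> G" using gi_props by blast

lemma gi_l: "g \<in> G \<Longrightarrow> blinfun_apply (gi g) (blinfun_apply g x) = x"
  using gi_props(3)[of g] by (metis blinfun_apply_blinfun_compose blinfun_apply_id_blinfun)

lemma gi_r: "g \<in> G \<Longrightarrow> blinfun_apply g (blinfun_apply (gi g) x) = x"
  using gi_props(2)[of g] by (metis blinfun_apply_blinfun_compose blinfun_apply_id_blinfun)

lemma gi_inv: "g \<in> G \<Longrightarrow> inv (blinfun_apply g) = blinfun_apply (gi g)"
  by (rule inv_unique_comp) (auto simp: fun_eq_iff gi_l gi_r)

lemma gi_iso: "g \<in> G \<Longrightarrow> norm (blinfun_apply (gi g) x) = norm x"
  using G_iso gi_G by blast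

lemma gi_unique: assumes "g \<in> G" "\<And>x. blinfun_apply h (blinfun_apply g x) = x" shows "gi g = h"
proof (rule blinfun_eqI)
  fix x
  have "blinfun_apply h x = blinfun_apply h (blinfun_apply g (blinfun_apply (gi g) x))" using gi_r[OF assms(1)] by simp
  also have "\<dots> = blinfun_apply (gi g) x" using assms(2) by simp
  finally show "blinfun_apply (gi g) x = blinfun_apply h x" by simp
qed

lemma K:
  assumes "\<And>n. h n \<in> G" "NW h" "weakly_conv a 0"
  shows "\<exists>s. strict_mono s \<and> weakly_conv (\<lambda>n. blinfun_apply (h (s n)) (a (s n))) 0"
  using G_weak[OF assms(1) NW_not_owc[OF assms(2)] assms(3)] .

lemma L3:
  assumes kG: "\<And>n. k n \<in> G" and nw: "NW k"
  shows "\<exists>s. strict_mono s \<and> NW (\<lambda>n. gi (k (s n)))"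
proof -
  obtain s1 A where s1: "strict_mono s1" "\<And>y. (\<lambda>n. blinfun_apply (k (s1 n)) y) \<longlonglongrightarrow> blinfun_apply A y"
    using G_strong[OF kG NW_not_owc[OF nw]] by blast
  obtain x and f :: "'a \<Rightarrow>\<^sub>L real" and \<epsilon> where e: "\<epsilon> > 0" "\<And>n. \<epsilon> \<le> \<bar>blinfun_apply f (blinfun_apply (k n) x)\<bar>"
    using nw unfolding NW_def by blast
  have "\<not> owc (\<lambda>n. gi (k (s1 n)))"
  proof
    assume o: "owc (\<lambda>n. gi (k (s1 n)))"
    have conv: "(\<lambda>n. blinfun_apply (gi (k (s1 n))) (blinfun_apply A x)) \<longlonglongrightarrow> x"
    proof -
      have "(\<lambda>n. blinfun_apply A x - blinfun_apply (k (s1 n)) x) \<longlonglongrightarrow> 0"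
        using tendsto_diff[OF tendsto_const s1(2)[of x], of "blinfun_apply A x"] by simp
      then have "(\<lambda>n. norm (blinfun_apply A x - blinfun_apply (k (s1 n)) x)) \<longlonglongrightarrow> 0"
        by (simp add: tendsto_norm_zero)
      moreover have "norm (blinfun_apply (gi (k (s1 n))) (blinfun_apply A x) - x) = norm (blinfun_apply A x - blinfun_apply (k (s1 n)) x)" for n
      proof -
        have "blinfun_apply (gi (k (s1 n))) (blinfun_apply A x) - x = blinfun_apply (gi (k (s1 n))) (blinfun_apply A x - blinfun_apply (k (s1 n)) x)"
          using gi_l[OF kG, of "s1 n" x] by (simp add: blinfun.diff_right)
        then show ?thesis using gi_iso[OF kG] by simp
      qed
      ultimately have "(\<lambda>n. norm (blinfun_apply (gi (k (s1 n))) (blinfun_apply A x) - x)) \<longlonglongrightarrow> 0" by simp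
      then show ?thesis by (simp add: tendsto_norm_zero_iff LIM_zero_iff)
    qed
    have "blinfun_apply f' x = 0" for f' :: "'a \<Rightarrow>\<^sub>L real"
    proof -
      have "weakly_conv (\<lambda>n. blinfun_apply (gi (k (s1 n))) (blinfun_apply A x)) 0" using o unfolding owc_iff by blast
      moreover have "weakly_conv (\<lambda>n. blinfun_apply (gi (k (s1 n))) (blinfun_apply A x)) x" using conv by (rule wc_strong)
      ultimately have "x = 0" using wc_unique by blast
      then show ?thesis by simp
    qed
    from this[of "f o\<^sub>L k (s1 0)"] have "blinfun_apply f (blinfun_apply (k (s1 0)) x) = 0" by simp
    then show False using e(2)[of "s1 0"] e(1) by simp
  qed
  from not_owc_NW[OF this] obtain s2 :: "nat \<Rightarrow> nat" where "strict_mono s2" "NW (\<lambda>n. gi (k (s1 (s2 n))))" by blast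
  moreover have "strict_mono (s1 \<circ> s2)" using s1(1) \<open>strict_mono s2\<close> by (rule strict_mono_o)
  ultimately show ?thesis by (auto simp: o_def)
qed

end


context prof begin

lemma orth_core:
  assumes gk: "\<And>n. gk n \<in> G" and hs: "\<And>n. hs n \<in> G"
    and a: "weakly_conv (\<lambda>n. blinfun_apply (gi (gk n)) (r n)) 0"
    and b: "weakly_conv (\<lambda>n. blinfun_apply (gi (hs n)) (r n)) w" and w: "w \<noteq> 0"
    and t: "strict_mono t" and nw: "NW (\<lambda>n. gi (hs (t n)) o\<^sub>L gk (t n))"
  shows False
proof -
  have hG: "\<And>n. gi (hs (t n)) o\<^sub>L gk (t n) \<in> G" using G_comp gi_G hs gk by blast
  have a': "weakly_conv (\<lambda>n. blinfun_apply (gi (gk (t n))) (r (t n))) 0" using wc_subseq[OF a t] .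
  obtain s :: "nat \<Rightarrow> nat" where s: "strict_mono s" and
    ws: "weakly_conv (\<lambda>n. blinfun_apply (gi (hs (t (s n))) o\<^sub>L gk (t (s n))) (blinfun_apply (gi (gk (t (s n)))) (r (t (s n))))) 0"
    using K[OF hG nw a'] by blast
  have "blinfun_apply (gi (hs (t (s n))) o\<^sub>L gk (t (s n))) (blinfun_apply (gi (gk (t (s n)))) (r (t (s n))))
      = blinfun_apply (gi (hs (t (s n)))) (r (t (s n)))" for n
    using gi_r[OF gk] by simp
  with ws have w0: "weakly_conv (\<lambda>n. blinfun_apply (gi (hs (t (s n)))) (r (t (s n)))) 0" by simp
  have "strict_mono (t \<circ> s)" using t s by (rule strict_mono_o)
  from wc_subseq[OF b this] have "weakly_conv (\<lambda>n. blinfun_apply (gi (hs (t (s n)))) (r (t (s n)))) w" by simp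
  with w0 have "w = 0" using wc_unique by metis
  with w show False by simp
qed

lemma orth:
  assumes gk: "\<And>n. gk n \<in> G" and hs: "\<And>n. hs n \<in> G"
    and a: "weakly_conv (\<lambda>n. blinfun_apply (gi (gk n)) (r n)) 0"
    and b: "weakly_conv (\<lambda>n. blinfun_apply (gi (hs n)) (r n)) w" and w: "w \<noteq> 0"
  shows "owc (\<lambda>n. gi (gk n) o\<^sub>L hs n)" "owc (\<lambda>n. gi (hs n) o\<^sub>L gk n)"
proof -
  show "owc (\<lambda>n. gi (hs n) o\<^sub>L gk n)"
  proof (rule ccontr)
    assume "\<not> owc (\<lambda>n. gi (hs n) o\<^sub>L gk n)"
    from not_owc_NW[OF this] obtain t :: "nat \<Rightarrow> nat" where "strict_mono t" "NW (\<lambda>n. gi (hs (t n)) o\<^sub>L gk (t n))"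
      by blast
    then show False using orth_core[OF gk hs a b w] by blast
  qed
  show "owc (\<lambda>n. gi (gk n) o\<^sub>L hs n)"
  proof (rule ccontr)
    assume "\<not> owc (\<lambda>n. gi (gk n) o\<^sub>L hs n)"
    from not_owc_NW[OF this] obtain t1 :: "nat \<Rightarrow> nat" where t1: "strict_mono t1" "NW (\<lambda>n. gi (gk (t1 n)) o\<^sub>L hs (t1 n))"
      by blast
    have kG: "\<And>n. gi (gk (t1 n)) o\<^sub>L hs (t1 n) \<in> G" using G_comp gi_G hs gk by blast
    from L3[OF kG t1(2)] obtain t2 :: "nat \<Rightarrow> nat" where t2: "strict_mono t2" "NW (\<lambda>n. gi (gi (gk (t1 (t2 n))) o\<^sub>L hs (t1 (t2 n))))"
      by blast
    have "gi (gi (gk m) o\<^sub>L hs m) = gi (hs m) o\<^sub>L gk m" for m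
      by (rule gi_unique) (use kG[of 0] G_comp gi_G hs gk gi_r gi_l in \<open>auto\<close>)
    with t2(2) have "NW (\<lambda>n. gi (hs (t1 (t2 n))) o\<^sub>L gk (t1 (t2 n)))" by simp
    moreover have "strict_mono (t1 \<circ> t2)" using t1(1) t2(1) by (rule strict_mono_o)
    ultimately show False using orth_core[OF gk hs a b w, of "t1 \<circ> t2"] by (simp add: o_def)
  qed
qed

definition R :: "nat \<Rightarrow> (nat \<Rightarrow> nat \<Rightarrow> 'a \<Rightarrow>\<^sub>L 'a) \<Rightarrow> (nat \<Rightarrow> 'a) \<Rightarrow> nat \<Rightarrow> 'a" where
  "R L Gs ws m = u m - (\<Sum>k\<le>L. blinfun_apply (Gs k m) (ws k))"

definition Inv :: "nat \<Rightarrow> (nat \<Rightarrow> nat) \<Rightarrow> (nat \<Rightarrow> nat \<Rightarrow> 'a \<Rightarrow>\<^sub>L 'a) \<Rightarrow> (nat \<Rightarrow> 'a) \<Rightarrow> bool" where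
  "Inv L \<sigma> Gs ws \<longleftrightarrow> strict_mono \<sigma> \<and> (\<forall>l m. Gs l m \<in> G) \<and> (\<forall>m. Gs 0 m = id_blinfun) \<and>
     (\<forall>l. 1 \<le> l \<and> l \<le> L \<longrightarrow> ws l \<noteq> 0) \<and>
     (\<forall>l\<le>L. weakly_conv (\<lambda>n. blinfun_apply (gi (Gs l (\<sigma> n))) (u (\<sigma> n))) (ws l)) \<and>
     (\<forall>l m. l \<le> L \<and> m \<le> L \<and> l \<noteq> m \<longrightarrow> owc (\<lambda>n. gi (Gs l (\<sigma> n)) o\<^sub>L Gs m (\<sigma> n)))"

definition Prof :: "nat \<Rightarrow> (nat \<Rightarrow> nat) \<Rightarrow> (nat \<Rightarrow> nat \<Rightarrow> 'a \<Rightarrow>\<^sub>L 'a) \<Rightarrow> (nat \<Rightarrow> 'a) \<Rightarrow> 'a set" where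
  "Prof L \<sigma> Gs ws = {w. \<exists>t hs. strict_mono t \<and> (\<forall>n. hs n \<in> G) \<and>
      weakly_conv (\<lambda>n. blinfun_apply (gi (hs n)) (R L Gs ws (\<sigma> (t n)))) w}"

lemma resid_weak:
  assumes I: "Inv L' \<sigma> Gs ws" and LL: "L \<le> L'" and k: "k \<le> L"
  shows "weakly_conv (\<lambda>n. blinfun_apply (gi (Gs k (\<sigma> n))) (R L Gs ws (\<sigma> n))) 0"
proof -
  have GG: "\<And>l m. Gs l m \<in> G" using I unfolding Inv_def by blast
  have wk: "weakly_conv (\<lambda>n. blinfun_apply (gi (Gs k (\<sigma> n))) (u (\<sigma> n))) (ws k)"
    using I LL k unfolding Inv_def by auto
  have terms: "weakly_conv (\<lambda>n. blinfun_apply (gi (Gs k (\<sigma> n))) (blinfun_apply (Gs j (\<sigma> n)) (ws j))) (if j = k then ws k else 0)"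
    if j: "j \<in> {..L}" for j
  proof (cases "j = k")
    case True
    then show ?thesis using gi_l[OF GG] by (simp add: wc_const)
  next
    case False
    then have "owc (\<lambda>n. gi (Gs k (\<sigma> n)) o\<^sub>L Gs j (\<sigma> n))" using I LL k j unfolding Inv_def by auto
    then show ?thesis using False unfolding owc_iff by simp
  qed
  have "weakly_conv (\<lambda>n. \<Sum>j\<le>L. blinfun_apply (gi (Gs k (\<sigma> n))) (blinfun_apply (Gs j (\<sigma> n)) (ws j)))
      (\<Sum>j\<le>L. (if j = k then ws k else 0))"
    by (rule wc_sum) (use terms in auto)
  moreover have "(\<Sum>j\<le>L. (if j = k then ws k else 0)) = ws k" using k by simp
  ultimately have s: "weakly_conv (\<lambda>n. \<Sum>j\<le>L. blinfun_apply (gi (Gs k (\<sigma> n))) (blinfun_apply (Gs j (\<sigma> n)) (ws j))) (ws k)"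
    by simp
  from wc_diff[OF wk s] show ?thesis
    by (simp add: R_def blinfun.diff_right blinfun.sum_right)
qed

lemma R_upd: "L < l \<Longrightarrow> R L (Gs(l := h)) (ws(l := w)) = R L Gs ws"
  unfolding R_def by (intro ext) simp

lemma step:
  assumes I: "Inv L \<sigma> Gs ws" and wP: "w \<in> Prof L \<sigma> Gs ws" and w0: "w \<noteq> 0"
  shows "\<exists>t hs'. strict_mono t \<and> Inv (Suc L) (\<sigma> \<circ> t) (Gs(Suc L := hs')) (ws(Suc L := w))"
proof -
  obtain t hs where t: "strict_mono t" and hs: "\<And>n. hs n \<in> G"
    and hw: "weakly_conv (\<lambda>n. blinfun_apply (gi (hs n)) (R L Gs ws (\<sigma> (t n)))) w"
    using wP unfolding Prof_def by blast
  define \<sigma>' where "\<sigma>' = \<sigma> \<circ> t"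
  have \<sigma>m: "strict_mono \<sigma>" using I unfolding Inv_def by blast
  have \<sigma>'m: "strict_mono \<sigma>'" unfolding \<sigma>'_def using \<sigma>m t by (rule strict_mono_o)
  define hs' where "hs' m = (if m \<in> range \<sigma>' then hs (inv \<sigma>' m) else id_blinfun)" for m
  have hs'\<sigma>: "hs' (\<sigma>' n) = hs n" for n
    unfolding hs'_def using strict_mono_imp_inj_on[OF \<sigma>'m] by (simp add: inv_f_f)
  have hs'G: "hs' m \<in> G" for m unfolding hs'_def using hs G_id by auto
  define Gs' where "Gs' = Gs(Suc L := hs')"
  define ws' where "ws' = ws(Suc L := w)"
  have GG: "\<And>l m. Gs l m \<in> G" using I unfolding Inv_def by blast
  have G'G: "Gs' l m \<in> G" for l m unfolding Gs'_def using GG hs'G by simp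
  have old_wk: "weakly_conv (\<lambda>n. blinfun_apply (gi (Gs l (\<sigma>' n))) (u (\<sigma>' n))) (ws l)" if "l \<le> L" for l
  proof -
    have "weakly_conv (\<lambda>n. blinfun_apply (gi (Gs l (\<sigma> n))) (u (\<sigma> n))) (ws l)" using I that unfolding Inv_def by blast
    from wc_subseq[OF this t] show ?thesis unfolding \<sigma>'_def by simp
  qed
  have old_o: "owc (\<lambda>n. gi (Gs l (\<sigma>' n)) o\<^sub>L Gs m (\<sigma>' n))" if "l \<le> L" "m \<le> L" "l \<noteq> m" for l m
  proof -
    have "owc (\<lambda>n. gi (Gs l (\<sigma> n)) o\<^sub>L Gs m (\<sigma> n))" using I that unfolding Inv_def by blast
    from owc_subseq[OF this t] show ?thesis unfolding \<sigma>'_def by simp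
  qed
  have res': "weakly_conv (\<lambda>n. blinfun_apply (gi (Gs k (\<sigma>' n))) (R L Gs ws (\<sigma>' n))) 0" if "k \<le> L" for k
  proof -
    from wc_subseq[OF resid_weak[OF I order_refl that] t] show ?thesis unfolding \<sigma>'_def by simp
  qed
  have hw': "weakly_conv (\<lambda>n. blinfun_apply (gi (hs n)) (R L Gs ws (\<sigma>' n))) w"
    using hw unfolding \<sigma>'_def by simp
  have o1: "owc (\<lambda>n. gi (Gs k (\<sigma>' n)) o\<^sub>L hs n)" and o2: "owc (\<lambda>n. gi (hs n) o\<^sub>L Gs k (\<sigma>' n))" if "k \<le> L" for k
    using orth[of "\<lambda>n. Gs k (\<sigma>' n)" hs "\<lambda>n. R L Gs ws (\<sigma>' n)" w] GG hs res'[OF that] hw' w0 by auto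
  have new_wk: "weakly_conv (\<lambda>n. blinfun_apply (gi (hs n)) (u (\<sigma>' n))) w"
  proof -
    have terms: "weakly_conv (\<lambda>n. blinfun_apply (gi (hs n)) (blinfun_apply (Gs k (\<sigma>' n)) (ws k))) 0" if "k \<in> {..L}" for k
      using o2[of k] that unfolding owc_iff by simp
    have "weakly_conv (\<lambda>n. \<Sum>k\<le>L. blinfun_apply (gi (hs n)) (blinfun_apply (Gs k (\<sigma>' n)) (ws k))) (\<Sum>k\<le>L. 0)"
      by (rule wc_sum) (use terms in auto)
    from wc_add[OF hw' this] show ?thesis
      by (simp add: R_def blinfun.diff_right blinfun.sum_right)
  qed
  have "Inv (Suc L) \<sigma>' Gs' ws'"
    unfolding Inv_def
  proof (intro conjI allI impI)
    show "strict_mono \<sigma>'" by (rule \<sigma>'m)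
    show "Gs' l m \<in> G" for l m by (rule G'G)
    show "Gs' 0 m = id_blinfun" for m unfolding Gs'_def using I unfolding Inv_def by simp
    show "ws' l \<noteq> 0" if "1 \<le> l \<and> l \<le> Suc L" for l
      using that I w0 unfolding ws'_def Inv_def by (cases "l = Suc L") auto
    show "weakly_conv (\<lambda>n. blinfun_apply (gi (Gs' l (\<sigma>' n))) (u (\<sigma>' n))) (ws' l)" if "l \<le> Suc L" for l
    proof (cases "l = Suc L")
      case True then show ?thesis unfolding Gs'_def ws'_def using new_wk by (simp add: hs'\<sigma>)
    next
      case False then show ?thesis unfolding Gs'_def ws'_def using old_wk that by simp
    qed
    show "owc (\<lambda>n. gi (Gs' l (\<sigma>' n)) o\<^sub>L Gs' m (\<sigma>' n))" if lm: "l \<le> Suc L \<and> m \<le> Suc L \<and> l \<noteq> m" for l m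
    proof -
      consider "l = Suc L" "m \<le> L" | "m = Suc L" "l \<le> L" | "l \<le> L" "m \<le> L" using lm by linarith
      then show ?thesis
      proof cases
        case 1 then show ?thesis unfolding Gs'_def using o2[of m] by (simp add: hs'\<sigma>)
      next
        case 2 then show ?thesis unfolding Gs'_def using o1[of l] by (simp add: hs'\<sigma>)
      next
        case 3 then show ?thesis unfolding Gs'_def using old_o[of l m] lm by simp
      qed
    qed
  qed
  then show ?thesis unfolding Gs'_def ws'_def \<sigma>'_def using t by blast
qed

end


context prof begin

lemma R_bound:
  assumes GG: "\<And>k m. Gs k m \<in> G"
  shows "\<exists>C. \<forall>m. norm (R L Gs ws m) \<le> C"
proof -
  obtain B where B: "\<And>m. norm (u m) \<le> B" using bnd unfolding bounded_iff by blast
  have "norm (R L Gs ws m) \<le> B + (\<Sum>k\<le>L. norm (ws k))" for m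
  proof -
    have "norm (R L Gs ws m) \<le> norm (u m) + norm (\<Sum>k\<le>L. blinfun_apply (Gs k m) (ws k))"
      unfolding R_def by (rule norm_triangle_ineq4)
    also have "norm (\<Sum>k\<le>L. blinfun_apply (Gs k m) (ws k)) \<le> (\<Sum>k\<le>L. norm (blinfun_apply (Gs k m) (ws k)))"
      by (rule norm_sum)
    also have "\<dots> = (\<Sum>k\<le>L. norm (ws k))" using G_iso[OF GG] by simp
    finally show ?thesis using B[of m] by simp
  qed
  then show ?thesis by blast
qed

lemma Prof_bound:
  assumes GG: "\<And>k m. Gs k m \<in> G"
  shows "\<exists>C. \<forall>v\<in>Prof L \<sigma> Gs ws. norm v \<le> C"
proof -
  obtain C where C: "\<And>m. norm (R L Gs ws m) \<le> C" using R_bound[of Gs, OF GG] by blast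
  have "norm v \<le> C" if vP: "v \<in> Prof L \<sigma> Gs ws" for v
  proof -
    obtain t :: "nat \<Rightarrow> nat" and hs where hs: "\<And>n. hs n \<in> G" and wc: "weakly_conv (\<lambda>n. blinfun_apply (gi (hs n)) (R L Gs ws (\<sigma> (t n)))) v"
      using vP unfolding Prof_def by blast
    show ?thesis by (rule wc_norm_le[OF wc]) (simp add: gi_iso[OF hs] C)
  qed
  then show ?thesis by blast
qed

lemma choose:
  assumes GG: "\<And>k m. Gs k m \<in> G" and ne: "\<not> Prof L \<sigma> Gs ws \<subseteq> {0}"
  shows "\<exists>w\<in>Prof L \<sigma> Gs ws. w \<noteq> 0 \<and> (\<forall>v\<in>Prof L \<sigma> Gs ws. norm v \<le> 2 * norm w)"
proof -
  let ?P = "Prof L \<sigma> Gs ws"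
  obtain C where C: "\<And>v. v \<in> ?P \<Longrightarrow> norm v \<le> C" using Prof_bound[of Gs, OF GG] by blast
  obtain v0 where v0: "v0 \<in> ?P" "v0 \<noteq> 0" using ne by blast
  have bdd: "bdd_above (norm ` ?P)" by (rule bdd_aboveI[of _ C]) (use C in auto)
  define T where "T = Sup (norm ` ?P)"
  have Tge: "norm v \<le> T" if vP: "v \<in> ?P" for v unfolding T_def by (rule cSup_upper) (use vP bdd in auto)
  have "norm v0 > 0" using v0(2) by simp
  then have Tpos: "T > 0" using Tge[OF v0(1)] by linarith
  have "T / 2 < Sup (norm ` ?P)" using Tpos unfolding T_def by simp
  moreover have ne: "norm ` ?P \<noteq> {}" using v0 by blast
  ultimately obtain x where "x \<in> norm ` ?P" "T / 2 < x" by (rule less_cSupE)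
  then obtain w where w: "w \<in> ?P" "T / 2 < norm w" by blast
  have "w \<noteq> 0" using w Tpos by auto
  moreover have "\<forall>v\<in>?P. norm v \<le> 2 * norm w"
  proof
    fix v assume "v \<in> ?P"
    then have "norm v \<le> T" by (rule Tge)
    then show "norm v \<le> 2 * norm w" using w(2) by linarith
  qed
  ultimately show ?thesis using w(1) by blast
qed

lemma Prof_transfer:
  fixes m0 :: nat
  assumes \<tau>: "strict_mono \<tau>" and ev: "\<And>n. n \<ge> m0 \<Longrightarrow> N n = \<sigma> (\<tau> n)" and s: "strict_mono s"
    and hs: "\<And>n. hs n \<in> G"
    and wc: "weakly_conv (\<lambda>n. blinfun_apply (gi (hs n)) (R L Gs ws (N (s n)))) v"
  shows "v \<in> Prof L \<sigma> Gs ws"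
proof -
  have sh: "strict_mono (\<lambda>n::nat. n + m0)" by (simp add: strict_mono_def)
  define t where "t n = \<tau> (s (n + m0))" for n
  have tm: "strict_mono t" unfolding t_def using \<tau> s sh by (simp add: strict_mono_def)
  have "N (s (n + m0)) = \<sigma> (t n)" for n
  proof -
    have "s (n + m0) \<ge> n + m0" using seq_suble[OF s] by blast
    then show ?thesis unfolding t_def using ev by simp
  qed
  moreover have "weakly_conv (\<lambda>n. blinfun_apply (gi (hs (n + m0))) (R L Gs ws (N (s (n + m0))))) v"
    using wc_subseq[OF wc sh] by simp
  ultimately have wt: "weakly_conv (\<lambda>n. blinfun_apply (gi (hs (n + m0))) (R L Gs ws (\<sigma> (t n)))) v" by simp
  show ?thesis unfolding Prof_def
    by (rule CollectI, rule exI[of _ t], rule exI[of _ "\<lambda>n. hs (n + m0)"]) (use tm hs wt in simp)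
qed

lemma Qbound:
  fixes m0 :: nat
  assumes GG: "\<And>k m. Gs k m \<in> G" and \<tau>: "strict_mono \<tau>" and ev: "\<And>n. n \<ge> m0 \<Longrightarrow> N n = \<sigma> (\<tau> n)"
    and c: "\<And>v. v \<in> Prof L \<sigma> Gs ws \<Longrightarrow> norm v \<le> c" and \<phi>: "norm \<phi> \<le> 1"
  shows "limsup (\<lambda>n. SUP h\<in>G. ereal \<bar>blinfun_apply \<phi> (blinfun_apply (gi h) (R L Gs ws (N n)))\<bar>) \<le> ereal c"
proof (rule ereal_le_epsilon2)
  fix e :: real assume e: "0 < e"
  let ?X = "\<lambda>n. SUP h\<in>G. ereal \<bar>blinfun_apply \<phi> (blinfun_apply (gi h) (R L Gs ws (N n)))\<bar>"
  have "eventually (\<lambda>n. ?X n \<le> ereal (c + e)) sequentially"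
  proof (rule ccontr)
    assume "\<not> ?thesis"
    then have "\<And>M. \<exists>n\<ge>M. \<not> ?X n \<le> ereal (c + e)" unfolding eventually_sequentially by blast
    then have "\<And>M. \<exists>n\<ge>M. \<exists>h\<in>G. c + e < \<bar>blinfun_apply \<phi> (blinfun_apply (gi h) (R L Gs ws (N n)))\<bar>"
      by (simp add: not_le less_SUP_iff)
    from freq_subseq[OF this] obtain s :: "nat \<Rightarrow> nat" where s: "strict_mono s"
      and P: "\<forall>n. \<exists>h\<in>G. c + e < \<bar>blinfun_apply \<phi> (blinfun_apply (gi h) (R L Gs ws (N (s n))))\<bar>"
      by blast
    then have "\<forall>n. \<exists>h. h \<in> G \<and> c + e < \<bar>blinfun_apply \<phi> (blinfun_apply (gi h) (R L Gs ws (N (s n))))\<bar>"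
      by blast
    then have "\<exists>hq. \<forall>n. hq n \<in> G \<and> c + e < \<bar>blinfun_apply \<phi> (blinfun_apply (gi (hq n)) (R L Gs ws (N (s n))))\<bar>"
      by (rule choice)
    then obtain hq where hq: "\<And>n. hq n \<in> G" "\<And>n. c + e < \<bar>blinfun_apply \<phi> (blinfun_apply (gi (hq n)) (R L Gs ws (N (s n))))\<bar>"
      by blast
    define vs where "vs n = blinfun_apply (gi (hq n)) (R L Gs ws (N (s n)))" for n
    obtain C where C: "\<And>m. norm (R L Gs ws m) \<le> C" using R_bound[of Gs, OF GG] by blast
    have "bounded (range vs)" unfolding bounded_iff vs_def using C gi_iso[OF hq(1)] by auto
    from wsc[OF refl this] obtain s2 :: "nat \<Rightarrow> nat" and v where s2: "strict_mono s2" and wv: "weakly_conv (\<lambda>n. vs (s2 n)) v"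
      by blast
    have "(\<lambda>n. blinfun_apply \<phi> (vs (s2 n))) \<longlonglongrightarrow> blinfun_apply \<phi> v" using wv unfolding weakly_conv_def by blast
    then have "(\<lambda>n. \<bar>blinfun_apply \<phi> (vs (s2 n))\<bar>) \<longlonglongrightarrow> \<bar>blinfun_apply \<phi> v\<bar>" by (rule tendsto_rabs)
    moreover have "\<forall>n\<ge>0. c + e \<le> \<bar>blinfun_apply \<phi> (vs (s2 n))\<bar>" using hq(2) unfolding vs_def by (simp add: less_imp_le)
    ultimately have ge: "c + e \<le> \<bar>blinfun_apply \<phi> v\<bar>" by (rule Lim_bounded2)
    have "\<bar>blinfun_apply \<phi> v\<bar> \<le> norm \<phi> * norm v" by (rule blinfun_ge_abs_le)
    also have "\<dots> \<le> norm v" using \<phi> by (simp add: mult_left_le_one_le)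
    finally have nv: "c + e \<le> norm v" using ge by simp
    have "strict_mono (s \<circ> s2)" using s s2 by (rule strict_mono_o)
    moreover have "weakly_conv (\<lambda>n. blinfun_apply (gi (hq (s2 n))) (R L Gs ws (N ((s \<circ> s2) n)))) v"
      using wv unfolding vs_def by simp
    ultimately have "v \<in> Prof L \<sigma> Gs ws" using Prof_transfer[where N=N and \<sigma>=\<sigma> and \<tau>=\<tau> and s="s \<circ> s2" and hs="\<lambda>n. hq (s2 n)", OF \<tau> ev] hq(1) by blast
    then have "norm v \<le> c" by (rule c)
    then show False using nv e by simp
  qed
  then have "limsup ?X \<le> ereal (c + e)" by (rule Limsup_bounded)
  then show "limsup ?X \<le> ereal c + ereal e" by simp
qed

lemma Q_nonneg:
  "0 \<le> (SUP \<phi>\<in>{\<phi>::'a \<Rightarrow>\<^sub>L real. norm \<phi> \<le> 1}. limsup (\<lambda>n. SUP h\<in>G. ereal \<bar>blinfun_apply \<phi> (X h n)\<bar>))"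
proof -
  have "(SUP h\<in>G. ereal \<bar>blinfun_apply (0::'a \<Rightarrow>\<^sub>L real) (X h n)\<bar>) = 0" for n
  proof -
    have "G \<noteq> {}" using G_id by blast
    then show ?thesis by simp
  qed
  then have "limsup (\<lambda>n. SUP h\<in>G. ereal \<bar>blinfun_apply (0::'a \<Rightarrow>\<^sub>L real) (X h n)\<bar>) = 0"
    by (simp add: Limsup_const)
  moreover have "limsup (\<lambda>n. SUP h\<in>G. ereal \<bar>blinfun_apply (0::'a \<Rightarrow>\<^sub>L real) (X h n)\<bar>) \<le>
    (SUP \<phi>\<in>{\<phi>::'a \<Rightarrow>\<^sub>L real. norm \<phi> \<le> 1}. limsup (\<lambda>n. SUP h\<in>G. ereal \<bar>blinfun_apply \<phi> (X h n)\<bar>))"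
    by (rule SUP_upper) simp
  ultimately show ?thesis by simp
qed

end


type_synonym 'a st = "(nat \<Rightarrow> nat) \<times> (nat \<Rightarrow> nat \<Rightarrow> 'a \<Rightarrow>\<^sub>L 'a) \<times> (nat \<Rightarrow> 'a) \<times> nat"

context prof begin

definition PP :: "nat \<Rightarrow> 'a st \<Rightarrow> bool" where
  "PP n x \<longleftrightarrow> (case x of (\<sigma>, Gs, ws, L) \<Rightarrow> Inv L \<sigma> Gs ws \<and> L \<le> n \<and> (L < n \<longrightarrow> Prof L \<sigma> Gs ws \<subseteq> {0}))"

definition QQ :: "nat \<Rightarrow> 'a st \<Rightarrow> 'a st \<Rightarrow> bool" where
  "QQ n x y \<longleftrightarrow> (case x of (\<sigma>, Gs, ws, L) \<Rightarrow> case y of (\<sigma>', Gs', ws', L') \<Rightarrow>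
    (\<exists>t. strict_mono t \<and> \<sigma>' = \<sigma> \<circ> t) \<and> (\<forall>l\<le>n. Gs' l = Gs l \<and> ws' l = ws l) \<and>
    (Prof L \<sigma> Gs ws \<subseteq> {0} \<longrightarrow> y = x) \<and>
    (\<not> Prof L \<sigma> Gs ws \<subseteq> {0} \<longrightarrow> L' = Suc L \<and> (\<forall>v\<in>Prof L \<sigma> Gs ws. norm v \<le> 2 * norm (ws' (Suc L)))))"

lemma gi_id: "gi id_blinfun = id_blinfun"
  by (rule gi_unique[OF G_id]) simp

lemma PP_init: "\<exists>x. PP 0 x"
proof -
  obtain s :: "nat \<Rightarrow> nat" and w where s: "strict_mono s" "weakly_conv (\<lambda>n. u (s n)) w"
    using wsc[OF refl bnd] by blast
  have "Inv 0 s (\<lambda>l m. id_blinfun) (\<lambda>l. w)"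
    unfolding Inv_def using s G_id by (simp add: gi_id)
  then have "PP 0 (s, \<lambda>l m. id_blinfun, \<lambda>l. w, 0)" unfolding PP_def by simp
  then show ?thesis by blast
qed

lemma PP_step:
  assumes "PP n x" shows "\<exists>y. PP (Suc n) y \<and> QQ n x y"
proof -
  obtain \<sigma> Gs ws L where x: "x = (\<sigma>, Gs, ws, L)" by (cases x) auto
  have I: "Inv L \<sigma> Gs ws" and Ln: "L \<le> n" and stop: "L < n \<longrightarrow> Prof L \<sigma> Gs ws \<subseteq> {0}"
    using assms unfolding x PP_def by auto
  show ?thesis
  proof (cases "Prof L \<sigma> Gs ws \<subseteq> {0}")
    case True
    have "PP (Suc n) x" unfolding x PP_def using I Ln True by simp
    moreover have "QQ n x x" unfolding x QQ_def using True
      by (auto intro!: exI[of _ id] simp: strict_mono_def)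
    ultimately show ?thesis by blast
  next
    case False
    then have Ln': "L = n" using stop Ln by linarith
    have GG: "\<And>k m. Gs k m \<in> G" using I unfolding Inv_def by blast
    from choose[of Gs, OF GG False] obtain w where w: "w \<in> Prof L \<sigma> Gs ws" "w \<noteq> 0"
      "\<forall>v\<in>Prof L \<sigma> Gs ws. norm v \<le> 2 * norm w" by blast
    from step[OF I w(1,2)] obtain t hs' where t: "strict_mono t"
      and I': "Inv (Suc L) (\<sigma> \<circ> t) (Gs(Suc L := hs')) (ws(Suc L := w))" by blast
    define y where "y = (\<sigma> \<circ> t, Gs(Suc L := hs'), ws(Suc L := w), Suc L)"
    have "PP (Suc n) y" unfolding y_def PP_def using I' Ln' by simp
    moreover have "QQ n x y" unfolding x y_def QQ_def using False t w(3) Ln' by auto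
    ultimately show ?thesis by blast
  qed
qed

lemma Inv_cong:
  assumes "Inv L \<sigma> Gs ws" "\<And>l m. Gs' l m \<in> G" "\<And>m. Gs' 0 m = id_blinfun"
    "\<And>l. l \<le> L \<Longrightarrow> Gs' l = Gs l" "\<And>l. l \<le> L \<Longrightarrow> ws' l = ws l"
  shows "Inv L \<sigma> Gs' ws'"
  using assms unfolding Inv_def by simp

lemma R_cong:
  assumes "\<And>l. l \<le> L \<Longrightarrow> Gs' l = Gs l" "\<And>l. l \<le> L \<Longrightarrow> ws' l = ws l"
  shows "R L Gs' ws' = R L Gs ws"
  unfolding R_def using assms by (intro ext) simp

lemma Prof_cong:
  assumes "\<And>l. l \<le> L \<Longrightarrow> Gs' l = Gs l" "\<And>l. l \<le> L \<Longrightarrow> ws' l = ws l"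
  shows "Prof L \<sigma> Gs' ws' = Prof L \<sigma> Gs ws"
  unfolding Prof_def using R_cong[OF assms] by simp

lemma SUP_gi: "(SUP h\<in>G. ereal \<bar>blinfun_apply \<phi> (inv (blinfun_apply h) x)\<bar>) =
    (SUP h\<in>G. ereal \<bar>blinfun_apply \<phi> (blinfun_apply (gi h) x)\<bar>)"
  by (rule SUP_cong) (simp_all add: gi_inv)

end


context prof begin

lemma main_loc:
  shows "\<exists>(\<Lambda>::enat) (N::nat \<Rightarrow> nat) (w::nat \<Rightarrow> 'a) (g::nat \<Rightarrow> nat \<Rightarrow> ('a \<Rightarrow>\<^sub>L 'a)).
    strict_mono N \<and>
    (\<forall>l n. enat l \<le> \<Lambda> \<and> l \<le> n \<longrightarrow> g l n \<in> G) \<and>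
    (\<forall>n. g 0 n = id_blinfun) \<and>
    (\<forall>l. 1 \<le> l \<and> enat l \<le> \<Lambda> \<longrightarrow> w l \<noteq> 0) \<and>
    (\<forall>l m. enat l \<le> \<Lambda> \<and> enat m \<le> \<Lambda> \<and> l \<noteq> m \<longrightarrow>
       (\<forall>x. weakly_conv (\<lambda>n. inv (blinfun_apply (g l n)) (blinfun_apply (g m n) x)) 0)) \<and>
    (\<forall>l. enat l \<le> \<Lambda> \<longrightarrow>
       weakly_conv (\<lambda>n. inv (blinfun_apply (g l n)) (u (N n))) (w l)) \<and>
    (\<forall>L l. enat L \<le> \<Lambda> \<and> l \<le> L \<longrightarrow>
       weakly_conv (\<lambda>n. inv (blinfun_apply (g l n))
          (u (N n) - (\<Sum>k\<le>L. blinfun_apply (g k n) (w k)))) 0) \<and>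
    (let Q = (\<lambda>L::nat. SUP \<phi>\<in>{\<phi>::'a \<Rightarrow>\<^sub>L real. norm \<phi> \<le> 1}.
               limsup (\<lambda>n. SUP h\<in>G. ereal \<bar>blinfun_apply \<phi>
                  (inv (blinfun_apply h) (u (N n) - (\<Sum>k\<le>L. blinfun_apply (g k n) (w k))))\<bar>))
     in (\<Lambda> \<noteq> \<infinity> \<longrightarrow> Q (the_enat \<Lambda>) = 0) \<and>
        (\<Lambda> = \<infinity> \<and> (\<lambda>l. norm (w l)) \<longlonglongrightarrow> 0 \<longrightarrow> Q \<longlonglongrightarrow> 0))"
proof -
  obtain f where f: "\<And>n. PP n (f n) \<and> QQ n (f n) (f (Suc n))"
    using dependent_nat_choice[of PP QQ, OF PP_init PP_step] by blast
  define \<sigma> where "\<sigma> n = fst (f n)" for n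
  define Gs where "Gs n = fst (snd (f n))" for n
  define ws where "ws n = fst (snd (snd (f n)))" for n
  define L where "L n = snd (snd (snd (f n)))" for n
  have fn: "f n = (\<sigma> n, Gs n, ws n, L n)" for n unfolding \<sigma>_def Gs_def ws_def L_def by simp
  have I: "Inv (L n) (\<sigma> n) (Gs n) (ws n)" and Ln: "L n \<le> n" for n
    using f[of n] unfolding fn PP_def by auto
  have tq: "\<exists>t. strict_mono t \<and> \<sigma> (Suc n) = \<sigma> n \<circ> t" for n
    using f[of n] unfolding fn[of n] fn[of "Suc n"] QQ_def by auto
  have eqs: "\<And>l. l \<le> n \<Longrightarrow> Gs (Suc n) l = Gs n l \<and> ws (Suc n) l = ws n l" for n
    using f[of n] unfolding fn[of n] fn[of "Suc n"] QQ_def by auto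
  have stay: "Prof (L n) (\<sigma> n) (Gs n) (ws n) \<subseteq> {0} \<Longrightarrow> f (Suc n) = f n" for n
    using f[of n] unfolding fn[of n] QQ_def by auto
  have grow: "\<not> Prof (L n) (\<sigma> n) (Gs n) (ws n) \<subseteq> {0} \<Longrightarrow> L (Suc n) = Suc (L n) \<and>
      (\<forall>v\<in>Prof (L n) (\<sigma> n) (Gs n) (ws n). norm v \<le> 2 * norm (ws (Suc n) (Suc (L n))))" for n
    using f[of n] unfolding fn[of n] fn[of "Suc n"] QQ_def by auto
  define GF where "GF l = Gs l l" for l
  define wF where "wF l = ws l l" for l
  have stab: "Gs m l = GF l \<and> ws m l = wF l" if "l \<le> m" for l m
    using that
  proof (induct m rule: dec_induct)
    case base then show ?case unfolding GF_def wF_def by simp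
  next
    case (step m) then show ?case using eqs[of l m] by simp
  qed
  have GG: "GF l m \<in> G" for l m using I[of l] unfolding Inv_def GF_def by blast
  have G0: "GF 0 m = id_blinfun" for m using I[of 0] unfolding Inv_def GF_def by blast
  have st2: "Gs n l = GF l \<and> ws n l = wF l" if "l \<le> L n" for l n
    using stab[of l n] Ln[of n] that by simp
  have IF: "Inv (L n) (\<sigma> n) GF wF" for n
    by (rule Inv_cong[where Gs'=GF and ws'=wF, OF I[of n] GG G0]) (simp_all add: st2)
  have ProfF: "Prof (L n) (\<sigma> n) GF wF = Prof (L n) (\<sigma> n) (Gs n) (ws n)" for n
    by (rule Prof_cong) (simp_all add: st2)
  have Lmono1: "L n \<le> L (Suc n)" for n
  proof (cases "Prof (L n) (\<sigma> n) (Gs n) (ws n) \<subseteq> {0}")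
    case True
    have "L (Suc n) = L n" using stay[OF True] unfolding L_def by simp
    then show ?thesis by simp
  next
    case False then show ?thesis using grow[OF False] by simp
  qed
  have Lmono: "n \<le> m \<Longrightarrow> L n \<le> L m" for n m using lift_Suc_mono_le[of L, OF Lmono1] .
  define S where "S = {n. Prof (L n) (\<sigma> n) (Gs n) (ws n) \<subseteq> {0}}"
  have const_after: "f m = f n0" if "n0 \<in> S" "n0 \<le> m" for n0 m
    using that(2)
  proof (induct m rule: dec_induct)
    case base then show ?case by simp
  next
    case (step m)
    then have "\<sigma> m = \<sigma> n0 \<and> Gs m = Gs n0 \<and> ws m = ws n0 \<and> L m = L n0"
      unfolding \<sigma>_def Gs_def ws_def L_def by simp
    then have "m \<in> S" using that(1) unfolding S_def by simp
    then show ?case using stay step unfolding S_def by simp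
  qed
  define \<Lambda> where "\<Lambda> = (SUP n. enat (L n))"
  have Lle: "enat (L n) \<le> \<Lambda>" for n unfolding \<Lambda>_def by (rule SUP_upper) simp
  have key1: "\<exists>n. l \<le> L n" if "enat l \<le> \<Lambda>" for l
  proof (rule ccontr)
    assume "\<not> ?thesis"
    then have lt: "\<And>n. L n < l" by (simp add: not_le)
    have "\<Lambda> \<le> enat (l - 1)" unfolding \<Lambda>_def
    proof (rule SUP_least)
      fix n :: nat show "enat (L n) \<le> enat (l - 1)" using lt[of n] by simp
    qed
    then have "enat l \<le> enat (l - 1)" using that by (rule order_trans[rotated])
    then show False using lt[of 0] by simp
  qed
  have key2: "\<exists>n. l \<le> L n \<and> m \<le> L n" if lm: "enat l \<le> \<Lambda>" "enat m \<le> \<Lambda>" for l m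
  proof -
    obtain n1 where "l \<le> L n1" using key1 lm(1) by blast
    moreover obtain n2 where "m \<le> L n2" using key1 lm(2) by blast
    ultimately show ?thesis using Lmono[of n1 "max n1 n2"] Lmono[of n2 "max n1 n2"] by (intro exI[of _ "max n1 n2"]) simp
  qed
  define N where "N n = \<sigma> n n" for n
  have s0: "strict_mono (\<sigma> 0)" using I[of 0] unfolding Inv_def by blast
  have Nmono: "strict_mono N" unfolding N_def using diag_seq(1)[of \<sigma>, OF s0 tq] .
  have Ntau: "\<exists>\<tau>. strict_mono \<tau> \<and> (\<forall>n\<ge>m. N n = \<sigma> m (\<tau> n))" for m
    unfolding N_def using diag_seq(2)[of \<sigma>, OF s0 tq] .
  have wtrans: "weakly_conv (\<lambda>k. X (N k)) v" if "weakly_conv (\<lambda>k. X (\<sigma> m k)) v" for X v m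
  proof -
    obtain \<tau> where \<tau>: "strict_mono \<tau>" "\<forall>n\<ge>m. N n = \<sigma> m (\<tau> n)" using Ntau by blast
    from wc_subseq[OF that \<tau>(1)] have "weakly_conv (\<lambda>k. X (\<sigma> m (\<tau> k))) v" .
    then show ?thesis by (rule wc_ev[where m = m]) (use \<tau>(2) in simp)
  qed
  have otrans: "owc (\<lambda>k. H (N k))" if o: "owc (\<lambda>k. H (\<sigma> m k))" for H m
    unfolding owc_iff
  proof
    fix x
    have "weakly_conv (\<lambda>k. blinfun_apply (H (\<sigma> m k)) x) 0" using o unfolding owc_iff by blast
    from wtrans[of "\<lambda>j. blinfun_apply (H j) x", OF this] show "weakly_conv (\<lambda>k. blinfun_apply (H (N k)) x) 0" .
  qed
  define g where "g l n = GF l (N n)" for l n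
  have ginv: "inv (blinfun_apply (g l n)) = blinfun_apply (gi (g l n))" for l n
    unfolding g_def using gi_inv[OF GG] .
  have c_w: "wF l \<noteq> 0" if hh: "1 \<le> l" "enat l \<le> \<Lambda>" for l
  proof -
    obtain n where "l \<le> L n" using key1 hh(2) by blast
    then show ?thesis using IF[of n] hh(1) unfolding Inv_def by blast
  qed
  have c_o: "weakly_conv (\<lambda>n. inv (blinfun_apply (g l n)) (blinfun_apply (g m n) x)) 0"
    if hh: "enat l \<le> \<Lambda>" "enat m \<le> \<Lambda>" "l \<noteq> m" for l m x
  proof -
    obtain n where n: "l \<le> L n" "m \<le> L n" using key2 hh(1,2) by blast
    then have "owc (\<lambda>k. gi (GF l (\<sigma> n k)) o\<^sub>L GF m (\<sigma> n k))" using IF[of n] hh(3) unfolding Inv_def by blast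
    from otrans[of "\<lambda>j. gi (GF l j) o\<^sub>L GF m j", OF this]
    have "owc (\<lambda>k. gi (g l k) o\<^sub>L g m k)" unfolding g_def .
    then show ?thesis unfolding owc_iff ginv by simp
  qed
  have c_iii: "weakly_conv (\<lambda>n. inv (blinfun_apply (g l n)) (u (N n))) (wF l)" if hh: "enat l \<le> \<Lambda>" for l
  proof -
    obtain n where n: "l \<le> L n" using key1 hh by blast
    then have "weakly_conv (\<lambda>k. blinfun_apply (gi (GF l (\<sigma> n k))) (u (\<sigma> n k))) (wF l)"
      using IF[of n] unfolding Inv_def by blast
    from wtrans[of "\<lambda>j. blinfun_apply (gi (GF l j)) (u j)", OF this]
    show ?thesis unfolding ginv unfolding g_def .
  qed
  have c_iv: "weakly_conv (\<lambda>n. inv (blinfun_apply (g l n)) (u (N n) - (\<Sum>k\<le>L0. blinfun_apply (g k n) (wF k)))) 0"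
    if hh: "enat L0 \<le> \<Lambda>" "l \<le> L0" for L0 l
  proof -
    obtain n where n: "L0 \<le> L n" using key1 hh(1) by blast
    from resid_weak[OF IF[of n] n hh(2)]
    have "weakly_conv (\<lambda>k. blinfun_apply (gi (GF l (\<sigma> n k))) (R L0 GF wF (\<sigma> n k))) 0" .
    from wtrans[of "\<lambda>j. blinfun_apply (gi (GF l j)) (R L0 GF wF j)", OF this]
    show ?thesis unfolding ginv unfolding g_def R_def .
  qed
  define Qg where "Qg L0 = (SUP \<phi>\<in>{\<phi>::'a \<Rightarrow>\<^sub>L real. norm \<phi> \<le> 1}.
               limsup (\<lambda>n. SUP h\<in>G. ereal \<bar>blinfun_apply \<phi> (blinfun_apply (gi h) (R L0 GF wF (N n)))\<bar>))" for L0
  have Qeq: "(\<lambda>L0::nat. SUP \<phi>\<in>{\<phi>::'a \<Rightarrow>\<^sub>L real. norm \<phi> \<le> 1}.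
               limsup (\<lambda>n. SUP h\<in>G. ereal \<bar>blinfun_apply \<phi>
                  (inv (blinfun_apply h) (u (N n) - (\<Sum>k\<le>L0. blinfun_apply (g k n) (wF k))))\<bar>)) = Qg"
    unfolding Qg_def R_def g_def by (simp only: SUP_gi)
  have Q0: "0 \<le> Qg L0" for L0 unfolding Qg_def by (rule Q_nonneg)
  have Qle: "Qg L0 \<le> ereal c" if c: "\<And>v. v \<in> Prof L0 (\<sigma> m) GF wF \<Longrightarrow> norm v \<le> c" for L0 m c
  proof -
    obtain \<tau> where \<tau>: "strict_mono \<tau>" "\<forall>n\<ge>m. N n = \<sigma> m (\<tau> n)" using Ntau by blast
    show ?thesis unfolding Qg_def
    proof (rule SUP_least)
      fix \<phi> :: "'a \<Rightarrow>\<^sub>L real" assume "\<phi> \<in> {\<phi>. norm \<phi> \<le> 1}"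
      then have "norm \<phi> \<le> 1" by simp
      from Qbound[of GF, OF GG \<tau>(1) _ c this] \<tau>(2)
      show "limsup (\<lambda>n. SUP h\<in>G. ereal \<bar>blinfun_apply \<phi> (blinfun_apply (gi h) (R L0 GF wF (N n)))\<bar>) \<le> ereal c"
        by blast
    qed
  qed
  have Lid: "L n = n" if hh: "S = {}" for n
  proof (induct n)
    case 0 then show ?case using Ln[of 0] by simp
  next
    case (Suc n)
    have "n \<notin> S" using hh by blast
    then have "\<not> Prof (L n) (\<sigma> n) (Gs n) (ws n) \<subseteq> {0}" unfolding S_def by simp
    then have "L (Suc n) = Suc (L n)" using grow[of n] by blast
    then show ?case using Suc by simp
  qed
  have fin: "\<Lambda> = enat (L n0)" if hh: "n0 \<in> S" for n0
  proof -
    have le: "L m \<le> L n0" for m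
    proof (cases "m \<le> n0")
      case True then show ?thesis by (rule Lmono)
    next
      case False
      then have "n0 \<le> m" by simp
      then have "f m = f n0" by (rule const_after[OF hh])
      then have "L m = L n0" unfolding L_def by (simp only:)
      then show ?thesis by simp
    qed
    have "\<Lambda> \<le> enat (L n0)" unfolding \<Lambda>_def
    proof (rule SUP_least)
      fix m :: nat assume "m \<in> UNIV"
      show "enat (L m) \<le> enat (L n0)" using le[of m] by (simp only: enat_ord_simps)
    qed
    moreover have "enat (L n0) \<le> \<Lambda>" by (rule Lle)
    ultimately show ?thesis by (rule antisym)
  qed
  have inf: "\<Lambda> = \<infinity>" if hh: "S = {}"
  proof (rule ccontr)
    assume "\<Lambda> \<noteq> \<infinity>"
    then obtain k where k: "\<Lambda> = enat k" by auto
    have "enat (L (Suc k)) \<le> \<Lambda>" by (rule Lle)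
    then show False using k Lid[OF hh, of "Suc k"] by simp
  qed
  have Qfin: "Qg (the_enat \<Lambda>) = 0" if hh: "\<Lambda> \<noteq> \<infinity>"
  proof -
    have "S \<noteq> {}"
    proof
      assume "S = {}"
      then have "\<Lambda> = \<infinity>" by (rule inf)
      with hh show False by simp
    qed
    then obtain n0 where n0: "n0 \<in> S" by blast
    have "Qg (L n0) \<le> ereal 0"
    proof (rule Qle)
      fix v assume "v \<in> Prof (L n0) (\<sigma> n0) GF wF"
      then have "v \<in> Prof (L n0) (\<sigma> n0) (Gs n0) (ws n0)" using ProfF[of n0] by simp
      then have "v \<in> {0}" using n0 unfolding S_def by blast
      then show "norm v \<le> 0" by simp
    qed
    then have "Qg (L n0) \<le> 0" by (simp add: zero_ereal_def)
    then have "Qg (L n0) = 0" using Q0[of "L n0"] by (rule antisym)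
    then show ?thesis using fin[OF n0] by simp
  qed
  have Qinf: "Qg \<longlonglongrightarrow> 0" if hh: "\<Lambda> = \<infinity>" "(\<lambda>l. norm (wF l)) \<longlonglongrightarrow> 0"
  proof -
    have S: "S = {}"
    proof (rule ccontr)
      assume "S \<noteq> {}"
      then obtain n0 where "n0 \<in> S" by blast
      from fin[OF this] hh(1) show False by simp
    qed
    have ub: "Qg L0 \<le> ereal (2 * norm (wF (Suc L0)))" for L0
    proof (rule Qle[of L0 L0])
      fix v assume v: "v \<in> Prof L0 (\<sigma> L0) GF wF"
      have nS: "L0 \<notin> S" using S by blast
      have LL: "L L0 = L0" using Lid[OF S] .
      have "v \<in> Prof (L L0) (\<sigma> L0) (Gs L0) (ws L0)" using v ProfF[of L0] LL by simp
      moreover have "\<not> Prof (L L0) (\<sigma> L0) (Gs L0) (ws L0) \<subseteq> {0}" using nS unfolding S_def by simp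
      ultimately have "norm v \<le> 2 * norm (ws (Suc L0) (Suc (L L0)))" using grow[of L0] by blast
      moreover have "ws (Suc L0) (Suc L0) = wF (Suc L0)" using stab[of "Suc L0" "Suc L0"] by simp
      ultimately show "norm v \<le> 2 * norm (wF (Suc L0))" using LL by simp
    qed
    have "(\<lambda>L0. norm (wF (Suc L0))) \<longlonglongrightarrow> 0" using hh(2) by (rule LIMSEQ_Suc)
    then have "(\<lambda>L0. 2 * norm (wF (Suc L0))) \<longlonglongrightarrow> 2 * 0" by (intro tendsto_mult tendsto_const)
    then have "(\<lambda>L0. ereal (2 * norm (wF (Suc L0)))) \<longlonglongrightarrow> ereal (2 * 0)" by (rule tendsto_ereal)
    then have up: "(\<lambda>L0. ereal (2 * norm (wF (Suc L0)))) \<longlonglongrightarrow> 0" by (simp add: zero_ereal_def)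
    show ?thesis
      by (rule tendsto_sandwich[OF _ _ tendsto_const up]) (use Q0 ub in auto)
  qed
  have h2: "\<forall>l n. enat l \<le> \<Lambda> \<and> l \<le> n \<longrightarrow> g l n \<in> G" unfolding g_def using GG by blast
  have h3: "\<forall>n. g 0 n = id_blinfun" unfolding g_def using G0 by blast
  have h4: "\<forall>l. 1 \<le> l \<and> enat l \<le> \<Lambda> \<longrightarrow> wF l \<noteq> 0" using c_w by blast
  have h5: "\<forall>l m. enat l \<le> \<Lambda> \<and> enat m \<le> \<Lambda> \<and> l \<noteq> m \<longrightarrow>
       (\<forall>x. weakly_conv (\<lambda>n. inv (blinfun_apply (g l n)) (blinfun_apply (g m n) x)) 0)" using c_o by blast
  have h6: "\<forall>l. enat l \<le> \<Lambda> \<longrightarrow> weakly_conv (\<lambda>n. inv (blinfun_apply (g l n)) (u (N n))) (wF l)"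
    using c_iii by blast
  have h7: "\<forall>L0 l. enat L0 \<le> \<Lambda> \<and> l \<le> L0 \<longrightarrow>
       weakly_conv (\<lambda>n. inv (blinfun_apply (g l n))
          (u (N n) - (\<Sum>k\<le>L0. blinfun_apply (g k n) (wF k)))) 0" using c_iv by blast
  have h8: "(let Q = (\<lambda>L0::nat. SUP \<phi>\<in>{\<phi>::'a \<Rightarrow>\<^sub>L real. norm \<phi> \<le> 1}.
               limsup (\<lambda>n. SUP h\<in>G. ereal \<bar>blinfun_apply \<phi>
                  (inv (blinfun_apply h) (u (N n) - (\<Sum>k\<le>L0. blinfun_apply (g k n) (wF k))))\<bar>))
     in (\<Lambda> \<noteq> \<infinity> \<longrightarrow> Q (the_enat \<Lambda>) = 0) \<and>
        (\<Lambda> = \<infinity> \<and> (\<lambda>l. norm (wF l)) \<longlonglongrightarrow> 0 \<longrightarrow> Q \<longlonglongrightarrow> 0))"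
    unfolding Let_def Qeq using Qfin Qinf by blast
  show ?thesis
    apply (rule exI[of _ \<Lambda>], rule exI[of _ N], rule exI[of _ wF], rule exI[of _ g])
    apply (intro conjI)
           apply (fact Nmono)
          apply (fact h2)
         apply (fact h3)
        apply (fact h4)
       apply (fact h5)
      apply (fact h6)
     apply (fact h7)
    apply (fact h8)
    done
qed

end


theorem mainTheorem1:
  fixes G :: "('a::banach \<Rightarrow>\<^sub>L 'a) set" and u :: "nat \<Rightarrow> 'a"
  assumes "reflexive_space TYPE('a)"
    and "dislocation_group G"
    and "bounded (range u)"
  shows "\<exists>(\<Lambda>::enat) (N::nat \<Rightarrow> nat) (w::nat \<Rightarrow> 'a) (g::nat \<Rightarrow> nat \<Rightarrow> ('a \<Rightarrow>\<^sub>L 'a)).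
    strict_mono N \<and>
    (\<forall>l n. enat l \<le> \<Lambda> \<and> l \<le> n \<longrightarrow> g l n \<in> G) \<and>
    (\<forall>n. g 0 n = id_blinfun) \<and>
    (\<forall>l. 1 \<le> l \<and> enat l \<le> \<Lambda> \<longrightarrow> w l \<noteq> 0) \<and>
    (\<forall>l m. enat l \<le> \<Lambda> \<and> enat m \<le> \<Lambda> \<and> l \<noteq> m \<longrightarrow>
       (\<forall>x. weakly_conv (\<lambda>n. inv (blinfun_apply (g l n)) (blinfun_apply (g m n) x)) 0)) \<and>
    (\<forall>l. enat l \<le> \<Lambda> \<longrightarrow>
       weakly_conv (\<lambda>n. inv (blinfun_apply (g l n)) (u (N n))) (w l)) \<and>
    (\<forall>L l. enat L \<le> \<Lambda> \<and> l \<le> L \<longrightarrow>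
       weakly_conv (\<lambda>n. inv (blinfun_apply (g l n))
          (u (N n) - (\<Sum>k\<le>L. blinfun_apply (g k n) (w k)))) 0) \<and>
    (let Q = (\<lambda>L::nat. SUP \<phi>\<in>{\<phi>::'a \<Rightarrow>\<^sub>L real. norm \<phi> \<le> 1}.
               limsup (\<lambda>n. SUP h\<in>G. ereal \<bar>blinfun_apply \<phi>
                  (inv (blinfun_apply h) (u (N n) - (\<Sum>k\<le>L. blinfun_apply (g k n) (w k))))\<bar>))
     in (\<Lambda> \<noteq> \<infinity> \<longrightarrow> Q (the_enat \<Lambda>) = 0) \<and>
        (\<Lambda> = \<infinity> \<and> (\<lambda>l. norm (w l)) \<longlonglongrightarrow> 0 \<longrightarrow> Q \<longlonglongrightarrow> 0))"
proof -
  interpret prof G u using assms by unfold_locales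
  show ?thesis by (rule main_loc)
qed

end
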